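(* Let $f\colon M^n\to\mathbb{R}^{n+p}$ be an isometric immersion with second fundamental form $\alpha$, normal connection $\nabla^\perp$ and curvature tensor $R$ of $M^n$, and let $\tau$ be an infinitesimal bending of $f$. Then for all $X,Y,Z,W\in\mathfrak{X}(M)$: $$\langle\beta(X,W),\alpha(Y,Z)\rangle+\langle\alpha(X,W),\beta(Y,Z)\rangle=\langle\beta(X,Z),\alpha(Y,W)\rangle+\langle\alpha(X,Z),\beta(Y,W)\rangle$$ and $$(\nabla^\perp_X\beta)(Y,Z)-(\nabla^\perp_Y\beta)(X,Z)=\alpha(Y,\mathcal{Y}(X,Z))-\alpha(X,\mathcal{Y}(Y,Z))-(LR(X,Y)Z)_{N_fM}.$$
   Context: An infinitesimal bending of $f$ is a smooth map $\tau\colon M^n\to\mathbb{R}^{n+p}$ with $\langle f_*X,\tilde\nabla_X\tau\rangle=0$ for all tangent $X$, $\tilde\nabla$ the Euclidean connection. Define $L\in\Gamma(\mathrm{Hom}(TM,f^*T\mathbb{R}^{n+p}))$ by $LX=\tilde\nabla_X\tau$ and the symmetric tensor $B(X,Y)=(\tilde\nabla_XL)Y=\tilde\nabla_X(LY)-L\nabla_XY$, with $\nabla$ the Levi-Civita connection of $M$. Write $B(X,Y)=f_*\mathcal{Y}(X,Y)+\beta(X,Y)$ with $\mathcal{Y}$ tangent and $\beta$ normal to $f$. Here $(\nabla^\perp_X\beta)(Y,Z)=\nabla^\perp_X\beta(Y,Z)-\beta(\nabla_XY,Z)-\beta(Y,\nabla_XZ)$ and $(\cdot)_{N_fM}$ denotes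 the normal component. *)

theory Defs
  imports "HOL-Analysis.Analysis"
begin

text \<open>Local (chart) model: M^n is an open set U of an n-dimensional Euclidean space 'a,
  the ambient space R^(n+p) is the Euclidean space 'b, vector fields on M are maps U -> 'a.\<close>

fun Ck :: "nat \<Rightarrow> 'a::euclidean_space set \<Rightarrow> ('a \<Rightarrow> 'b::real_normed_vector) \<Rightarrow> bool" where
  "Ck 0 U F = continuous_on U F"
| "Ck (Suc k) U F = ((\<forall>x\<in>U. F differentiable (at x)) \<and>
      (\<forall>v. Ck k U (\<lambda>x. frechet_derivative F (at x) v)))"

definition smooth_on :: "'a::euclidean_space set \<Rightarrow> ('a \<Rightarrow> 'b::real_normed_vector) \<Rightarrow> bool" where
  "smooth_on U F = (\<forall>k. Ck k U F)"

definition fd :: "('a::euclidean_space \<Rightarrow> 'b::real_normed_vector) \<Rightarrow> 'a \<Rightarrow> 'a \<Rightarrow> 'b" where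
  "fd F x = frechet_derivative F (at x)"

definition dir :: "('a::euclidean_space \<Rightarrow> 'b::real_normed_vector) \<Rightarrow> ('a \<Rightarrow> 'a) \<Rightarrow> 'a \<Rightarrow> 'b" where
  "dir F X x = fd F x (X x)"

definition push :: "('a::euclidean_space \<Rightarrow> 'b::real_normed_vector) \<Rightarrow> ('a \<Rightarrow> 'a) \<Rightarrow> 'a \<Rightarrow> 'b" where
  "push f X x = fd f x (X x)"

definition immersion_on :: "'a::euclidean_space set \<Rightarrow> ('a \<Rightarrow> 'b::euclidean_space) \<Rightarrow> bool" where
  "immersion_on U f = (open U \<and> smooth_on U f \<and> (\<forall>x\<in>U. inj (fd f x)))"

definition tanp :: "('a::euclidean_space \<Rightarrow> 'b::euclidean_space) \<Rightarrow> 'a \<Rightarrow> 'b \<Rightarrow> 'b" where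
  "tanp f x v = closest_point (range (fd f x)) v"

definition norp :: "('a::euclidean_space \<Rightarrow> 'b::euclidean_space) \<Rightarrow> 'a \<Rightarrow> 'b \<Rightarrow> 'b" where
  "norp f x v = v - tanp f x v"

definition gf :: "('a::euclidean_space \<Rightarrow> 'b::euclidean_space) \<Rightarrow> ('a \<Rightarrow> 'a) \<Rightarrow> ('a \<Rightarrow> 'a) \<Rightarrow> 'a \<Rightarrow> real" where
  "gf f X Y y = fd f y (X y) \<bullet> fd f y (Y y)"

definition bracket :: "('a::euclidean_space \<Rightarrow> 'a) \<Rightarrow> ('a \<Rightarrow> 'a) \<Rightarrow> 'a \<Rightarrow> 'a" where
  "bracket X Y x = dir Y X x - dir X Y x"

definition koszul :: "('a::euclidean_space \<Rightarrow> 'b::euclidean_space) \<Rightarrow> ('a \<Rightarrow> 'a) \<Rightarrow> ('a \<Rightarrow> 'a) \<Rightarrow> ('a \<Rightarrow> 'a) \<Rightarrow> 'a \<Rightarrow> real" where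
  "koszul f X Y Z x =
     dir (gf f Y Z) X x + dir (gf f X Z) Y x - dir (gf f X Y) Z x
     + gf f (bracket X Y) Z x - gf f (bracket X Z) Y x - gf f (bracket Y Z) X x"

definition LC :: "('a::euclidean_space \<Rightarrow> 'b::euclidean_space) \<Rightarrow> ('a \<Rightarrow> 'a) \<Rightarrow> ('a \<Rightarrow> 'a) \<Rightarrow> 'a \<Rightarrow> 'a" where
  "LC f X Y x = (THE w. \<forall>z. 2 * (fd f x w \<bullet> fd f x z) = koszul f X Y (\<lambda>_. z) x)"

definition curv :: "('a::euclidean_space \<Rightarrow> 'b::euclidean_space) \<Rightarrow> ('a \<Rightarrow> 'a) \<Rightarrow> ('a \<Rightarrow> 'a) \<Rightarrow> ('a \<Rightarrow> 'a) \<Rightarrow> 'a \<Rightarrow> 'a" where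
  "curv f X Y Z x = LC f X (LC f Y Z) x - LC f Y (LC f X Z) x - LC f (bracket X Y) Z x"

definition sff :: "('a::euclidean_space \<Rightarrow> 'b::euclidean_space) \<Rightarrow> ('a \<Rightarrow> 'a) \<Rightarrow> ('a \<Rightarrow> 'a) \<Rightarrow> 'a \<Rightarrow> 'b" where
  "sff f X Y x = norp f x (dir (push f Y) X x)"

definition inf_bending :: "'a::euclidean_space set \<Rightarrow> ('a \<Rightarrow> 'b::euclidean_space) \<Rightarrow> ('a \<Rightarrow> 'b) \<Rightarrow> bool" where
  "inf_bending U f \<tau> = (smooth_on U \<tau> \<and> (\<forall>x\<in>U. \<forall>v. fd f x v \<bullet> fd \<tau> x v = 0))"

definition Lmap :: "('a::euclidean_space \<Rightarrow> 'b::euclidean_space) \<Rightarrow> ('a \<Rightarrow> 'a) \<Rightarrow> 'a \<Rightarrow> 'b" where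
  "Lmap \<tau> X x = dir \<tau> X x"

definition Btens :: "('a::euclidean_space \<Rightarrow> 'b::euclidean_space) \<Rightarrow> ('a \<Rightarrow> 'b) \<Rightarrow> ('a \<Rightarrow> 'a) \<Rightarrow> ('a \<Rightarrow> 'a) \<Rightarrow> 'a \<Rightarrow> 'b" where
  "Btens f \<tau> X Y x = dir (Lmap \<tau> Y) X x - Lmap \<tau> (LC f X Y) x"

definition betaT :: "('a::euclidean_space \<Rightarrow> 'b::euclidean_space) \<Rightarrow> ('a \<Rightarrow> 'b) \<Rightarrow> ('a \<Rightarrow> 'a) \<Rightarrow> ('a \<Rightarrow> 'a) \<Rightarrow> 'a \<Rightarrow> 'b" where
  "betaT f \<tau> X Y x = norp f x (Btens f \<tau> X Y x)"

definition Ycal :: "('a::euclidean_space \<Rightarrow> 'b::euclidean_space) \<Rightarrow> ('a \<Rightarrow> 'b) \<Rightarrow> ('a \<Rightarrow> 'a) \<Rightarrow> ('a \<Rightarrow> 'a) \<Rightarrow> 'a \<Rightarrow> 'a" where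
  "Ycal f \<tau> X Y x = inv_into UNIV (fd f x) (tanp f x (Btens f \<tau> X Y x))"

definition nperp_beta :: "('a::euclidean_space \<Rightarrow> 'b::euclidean_space) \<Rightarrow> ('a \<Rightarrow> 'b) \<Rightarrow> ('a \<Rightarrow> 'a) \<Rightarrow> ('a \<Rightarrow> 'a) \<Rightarrow> ('a \<Rightarrow> 'a) \<Rightarrow> 'a \<Rightarrow> 'b" where
  "nperp_beta f \<tau> X Y Z x =
     norp f x (dir (betaT f \<tau> Y Z) X x) - betaT f \<tau> (LC f X Y) Z x - betaT f \<tau> Y (LC f X Z) x"

end

theory Submission
  imports Defs
begin


lemma fd_cong:
  assumes "open U" "x \<in> U" "\<And>y. y \<in> U \<Longrightarrow> F y = G y"
  shows "fd F x = fd G x"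
proof -
  have "\<And>f'. (F has_derivative f') (at x) \<longleftrightarrow> (G has_derivative f') (at x)"
    using has_derivative_transform_within_open assms by metis
  then show ?thesis unfolding fd_def frechet_derivative_def by simp
qed

lemma diff_cong:
  assumes "open U" "x \<in> U" "\<And>y. y \<in> U \<Longrightarrow> F y = G y"
  shows "F differentiable (at x) \<longleftrightarrow> G differentiable (at x)"
  unfolding differentiable_def
  using has_derivative_transform_within_open assms by metis

lemma hasd_cong:
  assumes "(F has_derivative F') (at x)" "open U" "x \<in> U" "\<And>y. y \<in> U \<Longrightarrow> F y = G y"
  shows "(G has_derivative F') (at x)"
  using has_derivative_transform_within_open assms by metis

lemma fd_works: "F differentiable (at x) \<Longrightarrow> (F has_derivative fd F x) (at x)"
  unfolding fd_def by (rule frechet_derivative_works[THEN iffD1])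

lemma fd_eq: "(F has_derivative F') (at x) \<Longrightarrow> fd F x = F'"
  unfolding fd_def using frechet_derivative_at by metis

lemma fd_linear: "F differentiable (at x) \<Longrightarrow> linear (fd F x)"
  using fd_works has_derivative_linear by blast

lemma Ck_cong:
  assumes "open U" "\<And>y. y \<in> U \<Longrightarrow> F y = G y"
  shows "Ck k U F = Ck k U G"
  using assms(2)
proof (induction k arbitrary: F G)
  case 0
  then show ?case using continuous_on_cong by force
next
  case (Suc k)
  have d: "(\<forall>x\<in>U. F differentiable (at x)) \<longleftrightarrow> (\<forall>x\<in>U. G differentiable (at x))"
    using diff_cong[OF assms(1)] Suc.prems by blast
  have "Ck k U (\<lambda>x. fd F x v) = Ck k U (\<lambda>x. fd G x v)" for v
    by (rule Suc.IH) (simp add: fd_cong[OF assms(1) _ Suc.prems])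
  then have "(\<forall>v. Ck k U (\<lambda>x. frechet_derivative F (at x) v)) = (\<forall>v. Ck k U (\<lambda>x. frechet_derivative G (at x) v))"
    unfolding fd_def by blast
  then show ?case using d by (simp only: Ck.simps)
qed

lemma Ck_mono: "Ck (Suc k) U F \<Longrightarrow> Ck k U F"
proof (induction k arbitrary: F)
  case 0
  then show ?case
    by (simp add: continuous_at_imp_continuous_on differentiable_imp_continuous_within)
next
  case (Suc k)
  from Suc.prems have "\<forall>x\<in>U. F differentiable (at x)" "\<forall>v. Ck (Suc k) U (\<lambda>x. frechet_derivative F (at x) v)"
    by simp_all
  then show ?case using Suc.IH by simp
qed

lemma Ck_SucI:
  assumes "open U" "\<And>x. x \<in> U \<Longrightarrow> (F has_derivative F' x) (at x)"
    "\<And>v. Ck k U (\<lambda>x. F' x v)"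
  shows "Ck (Suc k) U F"
proof -
  have "\<forall>x\<in>U. F differentiable (at x)" using assms(2) differentiable_def by blast
  moreover have "Ck k U (\<lambda>x. fd F x v)" for v
  proof -
    have "\<And>y. y \<in> U \<Longrightarrow> fd F y v = F' y v" using assms(2) fd_eq by metis
    then show ?thesis using assms(3)[of v] Ck_cong[OF assms(1), of "\<lambda>x. fd F x v" "\<lambda>x. F' x v"] by blast
  qed
  ultimately show ?thesis by (simp add: fd_def)
qed

lemma Ck_SucD:
  assumes "Ck (Suc k) U F"
  shows "\<And>x. x \<in> U \<Longrightarrow> (F has_derivative fd F x) (at x)" "\<And>v. Ck k U (\<lambda>x. fd F x v)"
  using assms fd_works by (auto simp: fd_def)

lemma smooth_iff:
  "smooth_on U F \<longleftrightarrow> continuous_on U F \<and> (\<forall>x\<in>U. F differentiable (at x)) \<and>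
     (\<forall>v. smooth_on U (\<lambda>x. fd F x v))"
  unfolding smooth_on_def fd_def
proof safe
  fix k v assume "\<forall>k. Ck k U F"
  then have "Ck (Suc k) U F" by blast
  then show "Ck k U (\<lambda>x. frechet_derivative F (at x) v)" by simp
next
  assume "\<forall>k. Ck k U F"
  then have "Ck 0 U F" by blast
  then show "continuous_on U F" by simp
next
  fix x assume "\<forall>k. Ck k U F" "x \<in> U"
  then have "Ck 1 U F" by blast
  then show "F differentiable at x" using \<open>x \<in> U\<close> by simp
next
  fix k
  assume "continuous_on U F" "\<forall>x\<in>U. F differentiable at x" "\<forall>v k. Ck k U (\<lambda>x. frechet_derivative F (at x) v)"
  then show "Ck k U F" by (cases k) simp_all
qed

lemma smooth_diff: "smooth_on U F \<Longrightarrow> x \<in> U \<Longrightarrow> F differentiable (at x)"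
  using smooth_iff by blast

lemma smooth_pd: "smooth_on U F \<Longrightarrow> smooth_on U (\<lambda>x. fd F x v)"
  using smooth_iff by blast

lemma smooth_cong: "open U \<Longrightarrow> (\<And>y. y \<in> U \<Longrightarrow> F y = G y) \<Longrightarrow> smooth_on U F = smooth_on U G"
  unfolding smooth_on_def using Ck_cong by blast

lemma Ck_const: "open U \<Longrightarrow> Ck k U (\<lambda>_. c)"
proof (induction k arbitrary: c)
  case 0 then show ?case by simp
next
  case (Suc k)
  show ?case
    by (rule Ck_SucI[where F'="\<lambda>x v. 0"]) (use Suc in auto)
qed

lemma Ck_linear:
  assumes "open U" "bounded_linear h"
  shows "Ck k U F \<Longrightarrow> Ck k U (\<lambda>y. h (F y))"
proof (induction k arbitrary: F)
  case 0 then show ?case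
    using assms(2) by (simp add: continuous_on_compose2[of UNIV h] linear_continuous_on)
next
  case (Suc k)
  note D = Ck_SucD[OF Suc.prems]
  show ?case
  proof (rule Ck_SucI[OF assms(1), where F'="\<lambda>x v. h (fd F x v)"])
    show "((\<lambda>y. h (F y)) has_derivative (\<lambda>v. h (fd F x v))) (at x)" if "x \<in> U" for x
      using bounded_linear.has_derivative[OF assms(2) D(1)[OF that]] .
    show "Ck k U (\<lambda>x. h (fd F x v))" for v using Suc.IH D(2) by blast
  qed
qed

lemma Ck_add:
  assumes "open U"
  shows "Ck k U F \<Longrightarrow> Ck k U G \<Longrightarrow> Ck k U (\<lambda>y. F y + G y)"
proof (induction k arbitrary: F G)
  case 0 then show ?case by (simp add: continuous_on_add)
next
  case (Suc k)
  note D1 = Ck_SucD[OF Suc.prems(1)] and D2 = Ck_SucD[OF Suc.prems(2)]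
  show ?case
  proof (rule Ck_SucI[OF assms(1), where F'="\<lambda>x v. fd F x v + fd G x v"])
    show "((\<lambda>y. F y + G y) has_derivative (\<lambda>v. fd F x v + fd G x v)) (at x)" if "x \<in> U" for x
      using has_derivative_add[OF D1(1)[OF that] D2(1)[OF that]] .
    show "Ck k U (\<lambda>x. fd F x v + fd G x v)" for v using Suc.IH D1(2) D2(2) by blast
  qed
qed

lemma Ck_bilinear:
  assumes "open U" "bounded_bilinear bil"
  shows "Ck k U F \<Longrightarrow> Ck k U G \<Longrightarrow> Ck k U (\<lambda>y. bil (F y) (G y))"
proof (induction k arbitrary: F G)
  case 0 then show ?case
    by (simp add: bounded_bilinear.continuous_on[OF assms(2)])
next
  case (Suc k)
  note D1 = Ck_SucD[OF Suc.prems(1)] and D2 = Ck_SucD[OF Suc.prems(2)]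
  have M: "Ck k U F" "Ck k U G" using Suc.prems Ck_mono by blast+
  show ?case
  proof (rule Ck_SucI[OF assms(1), where F'="\<lambda>x v. bil (F x) (fd G x v) + bil (fd F x v) (G x)"])
    show "((\<lambda>y. bil (F y) (G y)) has_derivative (\<lambda>v. bil (F x) (fd G x v) + bil (fd F x v) (G x))) (at x)"
      if "x \<in> U" for x
      using bounded_bilinear.FDERIV[OF assms(2) D1(1)[OF that] D2(1)[OF that]] .
    show "Ck k U (\<lambda>x. bil (F x) (fd G x v) + bil (fd F x v) (G x))" for v
      apply (rule Ck_add[OF assms(1)])
      using Suc.IH M D1(2) D2(2) by blast+
  qed
qed

lemma smooth_const: "open U \<Longrightarrow> smooth_on U (\<lambda>_. c)"
  by (simp add: smooth_on_def Ck_const)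
lemma smooth_linear: "open U \<Longrightarrow> bounded_linear h \<Longrightarrow> smooth_on U F \<Longrightarrow> smooth_on U (\<lambda>y. h (F y))"
  by (simp add: smooth_on_def Ck_linear)
lemma smooth_add: "open U \<Longrightarrow> smooth_on U F \<Longrightarrow> smooth_on U G \<Longrightarrow> smooth_on U (\<lambda>y. F y + G y)"
  by (simp add: smooth_on_def Ck_add)
lemma smooth_bilinear: "open U \<Longrightarrow> bounded_bilinear bil \<Longrightarrow> smooth_on U F \<Longrightarrow> smooth_on U G
   \<Longrightarrow> smooth_on U (\<lambda>y. bil (F y) (G y))"
  by (simp add: smooth_on_def Ck_bilinear)
lemma smooth_minus: "open U \<Longrightarrow> smooth_on U F \<Longrightarrow> smooth_on U (\<lambda>y. - F y)"
  using smooth_linear[of U "\<lambda>x. - x"] bounded_linear_minus[OF bounded_linear_ident] by auto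
lemma smooth_diffe: "open U \<Longrightarrow> smooth_on U F \<Longrightarrow> smooth_on U G \<Longrightarrow> smooth_on U (\<lambda>y. F y - G y)"
  using smooth_add[of U F "\<lambda>y. - G y"] smooth_minus[of U G] by simp
lemma smooth_sum: assumes "open U" shows "finite I \<Longrightarrow> (\<And>i. i \<in> I \<Longrightarrow> smooth_on U (F i)) \<Longrightarrow>
   smooth_on U (\<lambda>y. \<Sum>i\<in>I. F i y)"
proof (induction I rule: finite_induct)
  case empty then show ?case using smooth_const[OF assms] by simp
next
  case (insert j I)
  then show ?case using smooth_add[OF assms, of "F j" "\<lambda>y. \<Sum>i\<in>I. F i y"] by simp
qed

lemma lin_expand: "linear g \<Longrightarrow> g w = (\<Sum>i\<in>Basis. (w \<bullet> i) *\<^sub>R g i)"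
proof -
  assume "linear g"
  then have "g (\<Sum>i\<in>Basis. (w \<bullet> i) *\<^sub>R i) = (\<Sum>i\<in>Basis. (w \<bullet> i) *\<^sub>R g i)"
    by (simp add: linear_sum linear_cmul)
  then show ?thesis by (simp add: euclidean_representation)
qed

lemma smooth_dir:
  assumes "open U" "smooth_on U F" "smooth_on U X"
  shows "smooth_on U (\<lambda>y. fd F y (X y))"
proof -
  have "smooth_on U (\<lambda>y. \<Sum>i\<in>Basis. (X y \<bullet> i) *\<^sub>R fd F y i)"
    apply (rule smooth_sum[OF assms(1)], simp)
    apply (rule smooth_bilinear[OF assms(1) bounded_bilinear_scaleR])
     apply (rule smooth_linear[OF assms(1) bounded_linear_inner_left assms(3)])
    by (rule smooth_pd[OF assms(2)])
  moreover have "\<And>y. y \<in> U \<Longrightarrow> fd F y (X y) = (\<Sum>i\<in>Basis. (X y \<bullet> i) *\<^sub>R fd F y i)"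
    using lin_expand[OF fd_linear[OF smooth_diff[OF assms(2)]]] by blast
  ultimately show ?thesis using smooth_cong[OF assms(1), of "\<lambda>y. fd F y (X y)"] by simp
qed



definition d2 :: "('a::euclidean_space \<Rightarrow> 'b::real_normed_vector) \<Rightarrow> 'a \<Rightarrow> 'a \<Rightarrow> 'a \<Rightarrow> 'b" where
  "d2 F x a b = fd (\<lambda>y. fd F y a) x b"

lemma norm_xw: "norm (x - (x + w)) = norm (w::'a::real_normed_vector)"
  by (metis add_diff_cancel_left' norm_minus_commute)

lemma line_deriv:
  assumes "F differentiable (at (a + s *\<^sub>R v))"
  shows "((\<lambda>s. F (a + s *\<^sub>R v)) has_derivative (\<lambda>h. h *\<^sub>R fd F (a + s *\<^sub>R v) v)) (at s within S)"
proof -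
  have g: "((\<lambda>s. a + s *\<^sub>R v) has_derivative (\<lambda>h. h *\<^sub>R v)) (at s within S)"
    by (auto intro!: derivative_eq_intros)
  have "((\<lambda>s. F (a + s *\<^sub>R v)) has_derivative (\<lambda>h. fd F (a + s *\<^sub>R v) (h *\<^sub>R v))) (at s within S)"
    using has_derivative_compose[OF g fd_works[OF assms]] .
  moreover have "\<And>h. fd F (a + s *\<^sub>R v) (h *\<^sub>R v) = h *\<^sub>R fd F (a + s *\<^sub>R v) v"
    using fd_linear[OF assms] by (simp add: linear_cmul)
  ultimately show ?thesis by simp
qed

lemma schwarz_aux:
  fixes F :: "'a::euclidean_space \<Rightarrow> 'b::real_normed_vector"
  assumes U: "open U" "x \<in> U" and dF: "\<And>y. y \<in> U \<Longrightarrow> F differentiable (at y)"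
    and dG: "(\<lambda>y. fd F y v) differentiable (at x)" and e: "e > 0"
  shows "\<exists>d>0. \<forall>t. 0 < t \<and> t < d \<longrightarrow>
    norm (F (x + t *\<^sub>R u + t *\<^sub>R v) - F (x + t *\<^sub>R u) - F (x + t *\<^sub>R v) + F x - (t*t) *\<^sub>R d2 F x v u) \<le> e * (t*t)"
proof -
  define G where "G = (\<lambda>y. fd F y v)"
  define G' where "G' = fd G x"
  have hG: "(G has_derivative G') (at x)" unfolding G_def G'_def using fd_works[OF dG] .
  have linG': "linear G'" using hG has_derivative_linear by blast
  define M where "M = norm u + norm v + 1"
  have M: "M > 0" unfolding M_def by (simp add: add_nonneg_pos)
  define c where "c = d2 F x v u"
  have c: "c = G' u" unfolding c_def d2_def G'_def G_def by simp
  obtain d1 where d1: "d1 > 0" "\<And>y. norm (y - x) < d1 \<Longrightarrow> norm (G y - G x - G' (y - x)) \<le> (e / (2*M)) * norm (y - x)"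
  proof -
    have "e / (2*M) > 0" using e M by simp
    then show ?thesis using that hG[unfolded has_derivative_at_alt] by blast
  qed
  obtain dd2 where dd2: "dd2 > 0" "ball x dd2 \<subseteq> U" using U open_contains_ball by blast
  define d where "d = min d1 dd2 / M"
  have d: "d > 0" using d1 dd2 M unfolding d_def by simp
  show ?thesis
  proof (intro exI[of _ d] conjI allI impI d)
    fix t :: real assume t: "0 < t \<and> t < d"
    have tM: "t * M < min d1 dd2" using t M unfolding d_def by (simp add: pos_less_divide_eq)
    define S where "S = {0..t}"
    define \<phi> where "\<phi> = (\<lambda>s. F (x + t *\<^sub>R u + s *\<^sub>R v) - F (x + s *\<^sub>R v) - (s * t) *\<^sub>R c)"
    have nw: "norm (t *\<^sub>R u + s *\<^sub>R v) \<le> t * M" "norm (s *\<^sub>R v) \<le> t * M" if "s \<in> S" for s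
    proof -
      have "norm (t *\<^sub>R u + s *\<^sub>R v) \<le> t * norm u + s * norm v"
        using that t unfolding S_def by (metis abs_of_nonneg atLeastAtMost_iff less_eq_real_def norm_scaleR norm_triangle_ineq)
      also have "\<dots> \<le> t * norm u + t * norm v" using that unfolding S_def by (simp add: mult_right_mono)
      also have "\<dots> \<le> t * M" unfolding M_def using t by (simp add: distrib_left)
      finally show "norm (t *\<^sub>R u + s *\<^sub>R v) \<le> t * M" .
      have "norm (s *\<^sub>R v) = s * norm v" using that unfolding S_def by simp
      also have "\<dots> \<le> t * norm v" using that unfolding S_def by (simp add: mult_right_mono)
      also have "\<dots> \<le> t * M" unfolding M_def using t by (simp add: distrib_left)
      finally show "norm (s *\<^sub>R v) \<le> t * M" .
    qed
    have inU: "x + (t *\<^sub>R u + s *\<^sub>R v) \<in> U" "x + s *\<^sub>R v \<in> U" if "s \<in> S" for s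
    proof -
      have "norm (x - (x + (t *\<^sub>R u + s *\<^sub>R v))) < dd2" "norm (x - (x + s *\<^sub>R v)) < dd2"
        using nw[OF that] tM by (simp_all only: norm_xw)
      then show "x + (t *\<^sub>R u + s *\<^sub>R v) \<in> U" "x + s *\<^sub>R v \<in> U"
        using dd2(2) by (auto simp: dist_norm subset_iff)
    qed
    have der: "(\<phi> has_derivative (\<lambda>h. h *\<^sub>R (G (x + (t *\<^sub>R u + s *\<^sub>R v)) - G (x + s *\<^sub>R v) - t *\<^sub>R c))) (at s within S)"
      if "s \<in> S" for s
    proof -
      have a: "((\<lambda>s. F ((x + t *\<^sub>R u) + s *\<^sub>R v)) has_derivative (\<lambda>h. h *\<^sub>R G (x + (t *\<^sub>R u + s *\<^sub>R v)))) (at s within S)"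
        using line_deriv[of F "x + t *\<^sub>R u" s v S] dF[OF inU(1)[OF that]] unfolding G_def by (simp add: add.assoc)
      have b: "((\<lambda>s. F (x + s *\<^sub>R v)) has_derivative (\<lambda>h. h *\<^sub>R G (x + s *\<^sub>R v))) (at s within S)"
        using line_deriv[of F x s v S] dF[OF inU(2)[OF that]] unfolding G_def by simp
      have c: "((\<lambda>s. (s * t) *\<^sub>R c) has_derivative (\<lambda>h. (h * t) *\<^sub>R c)) (at s within S)"
        by (auto intro!: derivative_eq_intros)
      show ?thesis using has_derivative_diff[OF has_derivative_diff[OF a b] c] unfolding \<phi>_def
        by (simp add: algebra_simps add.assoc)
    qed
    have bnd: "onorm (\<lambda>h. h *\<^sub>R (G (x + (t *\<^sub>R u + s *\<^sub>R v)) - G (x + s *\<^sub>R v) - t *\<^sub>R c)) \<le> e * t"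
      if "s \<in> S" for s
    proof -
      let ?w = "t *\<^sub>R u + s *\<^sub>R v"
      have eq: "G (x + ?w) - G (x + s *\<^sub>R v) - t *\<^sub>R c =
          (G (x + ?w) - G x - G' ?w) - (G (x + s *\<^sub>R v) - G x - G' (s *\<^sub>R v))"
        using linG' c by (simp add: linear_add linear_cmul algebra_simps)
      have n1: "norm (G (x + ?w) - G x - G' ?w) \<le> (e / (2*M)) * (t * M)"
      proof -
        have "norm (G (x + ?w) - G x - G' ?w) \<le> (e / (2*M)) * norm ?w"
          using d1(2)[of "x + ?w"] nw(1)[OF that] tM by simp
        also have "\<dots> \<le> (e / (2*M)) * (t * M)" using nw(1)[OF that] e M by (intro mult_left_mono) auto
        finally show ?thesis .
      qed
      have n2: "norm (G (x + s *\<^sub>R v) - G x - G' (s *\<^sub>R v)) \<le> (e / (2*M)) * (t * M)"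
      proof -
        have "norm (G (x + s *\<^sub>R v) - G x - G' (s *\<^sub>R v)) \<le> (e / (2*M)) * norm (s *\<^sub>R v)"
          using d1(2)[of "x + s *\<^sub>R v"] nw(2)[OF that] tM by simp
        also have "\<dots> \<le> (e / (2*M)) * (t * M)" using nw(2)[OF that] e M by (intro mult_left_mono) auto
        finally show ?thesis .
      qed
      have "norm (G (x + ?w) - G (x + s *\<^sub>R v) - t *\<^sub>R c) \<le>
         norm (G (x + ?w) - G x - G' ?w) + norm (G (x + s *\<^sub>R v) - G x - G' (s *\<^sub>R v))"
        unfolding eq by (rule norm_triangle_ineq4)
      also have "\<dots> \<le> (e / (2*M)) * (t * M) + (e / (2*M)) * (t * M)"
        using n1 n2 by (rule add_mono)
      also have "\<dots> = e * t" using M by (simp add: field_simps)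
      finally have "norm (G (x + ?w) - G (x + s *\<^sub>R v) - t *\<^sub>R c) \<le> e * t" .
      then show ?thesis
        using onorm_scaleR_left[OF bounded_linear_ident, of "G (x + ?w) - G (x + s *\<^sub>R v) - t *\<^sub>R c"]
        by (simp add: onorm_id)
    qed
    have "norm (\<phi> t - \<phi> 0) \<le> e * t * norm (t - 0)"
      by (rule differentiable_bound[of S \<phi> _ "e * t"]) (use der bnd t in \<open>auto simp: S_def\<close>)
    moreover have "\<phi> t - \<phi> 0 = F (x + t *\<^sub>R u + t *\<^sub>R v) - F (x + t *\<^sub>R u) - F (x + t *\<^sub>R v) + F x - (t*t) *\<^sub>R d2 F x v u"
      unfolding \<phi>_def c_def by (simp add: algebra_simps)
    ultimately show "norm (F (x + t *\<^sub>R u + t *\<^sub>R v) - F (x + t *\<^sub>R u) - F (x + t *\<^sub>R v) + F x - (t*t) *\<^sub>R d2 F x v u) \<le> e * (t*t)"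
      using t by (simp add: mult.assoc)
  qed
qed

lemma schwarz:
  fixes F :: "'a::euclidean_space \<Rightarrow> 'b::real_normed_vector"
  assumes U: "open U" "x \<in> U" and dF: "\<And>y. y \<in> U \<Longrightarrow> F differentiable (at y)"
    and da: "(\<lambda>y. fd F y a) differentiable (at x)" and db: "(\<lambda>y. fd F y b) differentiable (at x)"
  shows "d2 F x a b = d2 F x b a"
proof -
  have *: "norm (d2 F x a b - d2 F x b a) \<le> 2 * e" if e: "e > 0" for e
  proof -
    obtain d1 where d1: "d1 > 0" "\<forall>t. 0 < t \<and> t < d1 \<longrightarrow>
      norm (F (x + t *\<^sub>R b + t *\<^sub>R a) - F (x + t *\<^sub>R b) - F (x + t *\<^sub>R a) + F x - (t*t) *\<^sub>R d2 F x a b) \<le> e * (t*t)"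
      using schwarz_aux[OF U dF da e, of b] by blast
    obtain dd2 where dd2: "dd2 > 0" "\<forall>t. 0 < t \<and> t < dd2 \<longrightarrow>
      norm (F (x + t *\<^sub>R a + t *\<^sub>R b) - F (x + t *\<^sub>R a) - F (x + t *\<^sub>R b) + F x - (t*t) *\<^sub>R d2 F x b a) \<le> e * (t*t)"
      using schwarz_aux[OF U dF db e, of a] by blast
    define t where "t = min d1 dd2 / 2"
    have t: "0 < t" "t < d1" "t < dd2" using d1 dd2 unfolding t_def by auto
    define D where "D = F (x + t *\<^sub>R a + t *\<^sub>R b) - F (x + t *\<^sub>R a) - F (x + t *\<^sub>R b) + F x"
    have eqD: "F (x + t *\<^sub>R b + t *\<^sub>R a) - F (x + t *\<^sub>R b) - F (x + t *\<^sub>R a) + F x = D"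
      unfolding D_def by (simp add: algebra_simps)
    have n1': "norm (F (x + t *\<^sub>R b + t *\<^sub>R a) - F (x + t *\<^sub>R b) - F (x + t *\<^sub>R a) + F x - (t*t) *\<^sub>R d2 F x a b) \<le> e * (t*t)"
      using d1(2) t by blast
    then have n1: "norm (D - (t*t) *\<^sub>R d2 F x a b) \<le> e * (t*t)" unfolding eqD .
    have n2: "norm (D - (t*t) *\<^sub>R d2 F x b a) \<le> e * (t*t)"
      using dd2(2) t unfolding D_def by blast
    have "(t*t) *\<^sub>R (d2 F x a b - d2 F x b a) = (D - (t*t) *\<^sub>R d2 F x b a) - (D - (t*t) *\<^sub>R d2 F x a b)"
      by (simp add: algebra_simps)
    then have "norm ((t*t) *\<^sub>R (d2 F x a b - d2 F x b a)) \<le> norm (D - (t*t) *\<^sub>R d2 F x b a) + norm (D - (t*t) *\<^sub>R d2 F x a b)"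
      by (metis norm_triangle_ineq4)
    also have "\<dots> \<le> e * (t*t) + e * (t*t)" using n2 n1 by (rule add_mono)
    finally have "norm ((t*t) *\<^sub>R (d2 F x a b - d2 F x b a)) \<le> e * (t*t) + e * (t*t)" .
    then have "\<bar>t*t\<bar> * norm (d2 F x a b - d2 F x b a) \<le> e * (t*t) + e * (t*t)" by (simp only: norm_scaleR)
    then have "(t*t) * norm (d2 F x a b - d2 F x b a) \<le> (t*t) * (2 * e)" by (simp add: algebra_simps)
    then show ?thesis using t by (simp add: mult_le_cancel_left_pos)
  qed
  then have "norm (d2 F x a b - d2 F x b a) \<le> 0 + e" if "e > 0" for e
  proof -
    have "e/2 > 0" using that by simp
    from *[OF this] show ?thesis by simp
  qed
  then have "norm (d2 F x a b - d2 F x b a) \<le> 0"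
    by (rule field_le_epsilon)
  then show ?thesis by simp
qed



lemma d2_expand:
  assumes "open U" "smooth_on U F" "x \<in> U"
  shows "d2 F x a b = (\<Sum>i\<in>Basis. (a \<bullet> i) *\<^sub>R d2 F x i b)"
proof -
  have eq: "fd F y a = (\<Sum>i\<in>Basis. (a \<bullet> i) *\<^sub>R fd F y i)" if "y \<in> U" for y
    by (rule lin_expand[OF fd_linear[OF smooth_diff[OF assms(2) that]]])
  have hd: "((\<lambda>y. \<Sum>i\<in>Basis. (a \<bullet> i) *\<^sub>R fd F y i) has_derivative
      (\<lambda>b. \<Sum>i\<in>Basis. (a \<bullet> i) *\<^sub>R d2 F x i b)) (at x)"
    unfolding d2_def
    by (rule has_derivative_sum, rule has_derivative_scaleR_right, rule fd_works,
        rule smooth_diff[OF smooth_pd[OF assms(2)] assms(3)])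
  have "fd (\<lambda>y. fd F y a) x = fd (\<lambda>y. \<Sum>i\<in>Basis. (a \<bullet> i) *\<^sub>R fd F y i) x"
    using fd_cong[OF assms(1) assms(3) eq] .
  also have "\<dots> = (\<lambda>b. \<Sum>i\<in>Basis. (a \<bullet> i) *\<^sub>R d2 F x i b)" using fd_eq[OF hd] .
  finally show ?thesis unfolding d2_def by simp
qed

lemma d2_linear1:
  assumes "open U" "smooth_on U F" "x \<in> U"
  shows "linear (\<lambda>a. d2 F x a b)"
proof -
  have e: "(\<lambda>a. d2 F x a b) = (\<lambda>a. \<Sum>i\<in>Basis. (a \<bullet> i) *\<^sub>R d2 F x i b)"
    by (rule ext) (rule d2_expand[OF assms])
  show ?thesis unfolding e
    by (auto simp: linear_iff inner_add_left scaleR_add_left sum.distrib scaleR_sum_right inner_scaleR_left)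
qed

lemma d2_linear2:
  assumes "smooth_on U F" "x \<in> U"
  shows "linear (d2 F x a)"
  unfolding d2_def[abs_def] using fd_linear[OF smooth_diff[OF smooth_pd[OF assms(1)] assms(2)]] by simp

lemma d2_sym:
  assumes "open U" "smooth_on U F" "x \<in> U"
  shows "d2 F x a b = d2 F x b a"
  by (rule schwarz[OF assms(1,3)]) (auto intro: smooth_diff[OF assms(2)] smooth_diff[OF smooth_pd[OF assms(2)] assms(3)])

lemma dpush:
  assumes "open U" "smooth_on U F" "x \<in> U" "W differentiable (at x)"
  shows "((\<lambda>y. fd F y (W y)) has_derivative (\<lambda>v. d2 F x (W x) v + fd F x (fd W x v))) (at x)"
proof -
  have eq: "(\<Sum>i\<in>Basis. (W y \<bullet> i) *\<^sub>R fd F y i) = fd F y (W y)" if "y \<in> U" for y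
    by (rule lin_expand[OF fd_linear[OF smooth_diff[OF assms(2) that]], symmetric])
  have hd: "((\<lambda>y. \<Sum>i\<in>Basis. (W y \<bullet> i) *\<^sub>R fd F y i) has_derivative
      (\<lambda>v. \<Sum>i\<in>Basis. ((W x \<bullet> i) *\<^sub>R d2 F x i v + (fd W x v \<bullet> i) *\<^sub>R fd F x i))) (at x)"
    unfolding d2_def
    by (rule has_derivative_sum, rule has_derivative_scaleR[OF has_derivative_inner_left[OF fd_works[OF assms(4)]]
        fd_works[OF smooth_diff[OF smooth_pd[OF assms(2)] assms(3)]]])
  have "(\<lambda>v. \<Sum>i\<in>Basis. ((W x \<bullet> i) *\<^sub>R d2 F x i v + (fd W x v \<bullet> i) *\<^sub>R fd F x i))
      = (\<lambda>v. d2 F x (W x) v + fd F x (fd W x v))"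
    using d2_expand[OF assms(1-3), of "W x", symmetric] lin_expand[OF fd_linear[OF smooth_diff[OF assms(2,3)]], of "fd W x _", symmetric]
    by (simp add: sum.distrib)
  with hd have "((\<lambda>y. \<Sum>i\<in>Basis. (W y \<bullet> i) *\<^sub>R fd F y i) has_derivative
      (\<lambda>v. d2 F x (W x) v + fd F x (fd W x v))) (at x)" by simp
  from hasd_cong[OF this assms(1) assms(3) eq] show ?thesis .
qed

lemma dpush_fd:
  assumes "open U" "smooth_on U F" "x \<in> U" "W differentiable (at x)"
  shows "fd (\<lambda>y. fd F y (W y)) x v = d2 F x (W x) v + fd F x (fd W x v)"
  using fd_eq[OF dpush[OF assms]] by simp

lemma dpush_diff:
  assumes "open U" "smooth_on U F" "x \<in> U" "W differentiable (at x)"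
  shows "(\<lambda>y. fd F y (W y)) differentiable (at x)"
  using dpush[OF assms] differentiable_def by blast



lemma range_props:
  fixes F :: "'a::euclidean_space \<Rightarrow> 'b::euclidean_space"
  assumes "linear F"
  shows "closed (range F)" "convex (range F)" "range F \<noteq> {}" "subspace (range F)"
proof -
  show s: "subspace (range F)" using linear_subspace_image[OF assms subspace_UNIV] .
  show "closed (range F)" using closed_subspace[OF s] .
  show "convex (range F)" using subspace_imp_convex[OF s] .
  show "range F \<noteq> {}" by simp
qed

lemma proj_in:
  fixes F :: "'a::euclidean_space \<Rightarrow> 'b::euclidean_space"
  assumes "linear F"
  shows "closest_point (range F) b \<in> range F"
  using closest_point_in_set range_props[OF assms] by blast

lemma proj_orth:
  fixes F :: "'a::euclidean_space \<Rightarrow> 'b::euclidean_space"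
  assumes "linear F"
  shows "(b - closest_point (range F) b) \<bullet> F w = 0"
proof -
  let ?p = "closest_point (range F) b"
  obtain w0 where w0: "?p = F w0" using proj_in[OF assms] by blast
  have "(b - ?p) \<bullet> (F (w0 + w) - ?p) \<le> 0"
    using closest_point_dot[OF range_props(2,1)[OF assms]] by blast
  moreover have "(b - ?p) \<bullet> (F (w0 - w) - ?p) \<le> 0"
    using closest_point_dot[OF range_props(2,1)[OF assms]] by blast
  ultimately show ?thesis using w0 linear_add[OF assms] linear_diff[OF assms]
    by (simp add: inner_diff_right)
qed

lemma proj_unique:
  fixes F :: "'a::euclidean_space \<Rightarrow> 'b::euclidean_space"
  assumes "linear F" "p \<in> range F" "\<And>w. (b - p) \<bullet> F w = 0"
  shows "closest_point (range F) b = p"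
proof -
  have "dist b p \<le> dist b z" if "z \<in> range F" for z
  proof -
    obtain w1 w2 where w: "p = F w1" "z = F w2" using assms(2) \<open>z \<in> range F\<close> by blast
    have o: "(b - p) \<bullet> (p - z) = 0" using assms(3)[of "w1 - w2"] w linear_diff[OF assms(1)] by simp
    have "(dist b z)\<^sup>2 = (norm ((b - p) + (p - z)))\<^sup>2" by (simp add: dist_norm)
    also have "\<dots> = (norm (b - p))\<^sup>2 + (norm (p - z))\<^sup>2"
      by (rule norm_add_Pythagorean) (use o in \<open>simp add: orthogonal_def\<close>)
    finally have eq2: "(dist b z)\<^sup>2 = (norm (b - p))\<^sup>2 + (norm (p - z))\<^sup>2" .
    have "(dist b p)\<^sup>2 = (norm (b - p))\<^sup>2" by (simp add: dist_norm)
    then have "(dist b p)\<^sup>2 \<le> (dist b z)\<^sup>2" using eq2 zero_le_power2[of "norm (p - z)"] by linarith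
    then show ?thesis by (rule power2_le_imp_le) simp
  qed
  then show ?thesis
    using closest_point_unique[OF range_props(2,1)[OF assms(1)] assms(2)] by metis
qed

lemma proj_fix:
  fixes F :: "'a::euclidean_space \<Rightarrow> 'b::euclidean_space"
  shows "closest_point (range F) (F w) = F w"
  by (rule closest_point_self) simp

lemma proj_linear:
  fixes F :: "'a::euclidean_space \<Rightarrow> 'b::euclidean_space"
  assumes "linear F"
  shows "linear (closest_point (range F))"
proof (rule linearI)
  fix a b :: 'b and r :: real
  let ?P = "closest_point (range F)"
  have s: "subspace (range F)" using range_props[OF assms] by blast
  show "?P (a + b) = ?P a + ?P b"
    apply (rule proj_unique[OF assms])
    using subspace_add[OF s proj_in[OF assms] proj_in[OF assms]] apply blast
    using proj_orth[OF assms, of a] proj_orth[OF assms, of b]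
    by (simp add: algebra_simps inner_diff_left inner_add_left)
  show "?P (r *\<^sub>R a) = r *\<^sub>R ?P a"
    apply (rule proj_unique[OF assms])
    using subspace_scale[OF s proj_in[OF assms]] apply blast
    using proj_orth[OF assms, of a]
    by (simp add: algebra_simps inner_diff_left inner_scaleR_left)
qed

definition solv :: "('a::euclidean_space \<Rightarrow> 'b::euclidean_space) \<Rightarrow> 'b \<Rightarrow> 'a" where
  "solv F b = inv_into UNIV F (closest_point (range F) b)"

lemma solv_F:
  fixes F :: "'a::euclidean_space \<Rightarrow> 'b::euclidean_space"
  assumes "linear F"
  shows "F (solv F b) = closest_point (range F) b"
  unfolding solv_def using f_inv_into_f[OF proj_in[OF assms]] .

lemma solv_on_F:
  fixes F :: "'a::euclidean_space \<Rightarrow> 'b::euclidean_space"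
  assumes "inj F"
  shows "solv F (F w) = w"
  unfolding solv_def proj_fix using inv_into_f_f[OF assms] by simp

lemma solv_linear:
  fixes F :: "'a::euclidean_space \<Rightarrow> 'b::euclidean_space"
  assumes "linear F" "inj F"
  shows "linear (solv F)"
proof (rule linearI)
  fix a b :: 'b and r :: real
  have P: "linear (closest_point (range F))" using proj_linear[OF assms(1)] .
  have "F (solv F (a + b)) = F (solv F a + solv F b)"
    using solv_F[OF assms(1)] linear_add[OF assms(1)] linear_add[OF P] by metis
  then show "solv F (a + b) = solv F a + solv F b" using assms(2) injD by metis
  have "F (solv F (r *\<^sub>R a)) = F (r *\<^sub>R solv F a)"
    using solv_F[OF assms(1)] linear_cmul[OF assms(1)] linear_cmul[OF P] by metis
  then show "solv F (r *\<^sub>R a) = r *\<^sub>R solv F a" using assms(2) injD by metis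
qed

lemma solv_inner:
  fixes F :: "'a::euclidean_space \<Rightarrow> 'b::euclidean_space"
  assumes "linear F"
  shows "F (solv F b) \<bullet> F w = b \<bullet> F w"
  using proj_orth[OF assms, of b w] solv_F[OF assms] by (simp add: inner_diff_left)



lemma imm_open: "immersion_on U f \<Longrightarrow> open U" by (simp add: immersion_on_def)
lemma imm_smooth: "immersion_on U f \<Longrightarrow> smooth_on U f" by (simp add: immersion_on_def)
lemma imm_inj: "immersion_on U f \<Longrightarrow> x \<in> U \<Longrightarrow> inj (fd f x)" by (simp add: immersion_on_def)
lemma imm_linear: "immersion_on U f \<Longrightarrow> x \<in> U \<Longrightarrow> linear (fd f x)"
  by (rule fd_linear[OF smooth_diff[OF imm_smooth]])

lemma push_eq: "push f Z = (\<lambda>y. fd f y (Z y))" by (rule ext) (simp add: push_def)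

lemma push_fd:
  assumes "immersion_on U f" "x \<in> U" "Z differentiable (at x)"
  shows "fd (push f Z) x v = d2 f x (Z x) v + fd f x (fd Z x v)"
  unfolding push_eq using dpush_fd[OF imm_open[OF assms(1)] imm_smooth[OF assms(1)] assms(2,3)] .

lemma push_diff:
  assumes "immersion_on U f" "x \<in> U" "Z differentiable (at x)"
  shows "push f Z differentiable (at x)"
  unfolding push_eq using dpush_diff[OF imm_open[OF assms(1)] imm_smooth[OF assms(1)] assms(2,3)] .

lemma gf_fd:
  assumes "immersion_on U f" "x \<in> U" "P differentiable (at x)" "Q differentiable (at x)"
  shows "fd (gf f P Q) x v = fd (push f P) x v \<bullet> push f Q x + push f P x \<bullet> fd (push f Q) x v"
proof -
  have e: "gf f P Q = (\<lambda>y. push f P y \<bullet> push f Q y)" by (rule ext) (simp add: gf_def push_def)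
  have "(gf f P Q has_derivative (\<lambda>v. push f P x \<bullet> fd (push f Q) x v + fd (push f P) x v \<bullet> push f Q x)) (at x)"
    unfolding e
    by (rule has_derivative_inner[OF fd_works[OF push_diff[OF assms(1,2,3)]] fd_works[OF push_diff[OF assms(1,2,4)]]])
  from fd_eq[OF this] show ?thesis by (simp add: add.commute)
qed

lemma fd_const: "fd (\<lambda>_. c) x = (\<lambda>_. 0)"
  by (rule fd_eq) simp

lemma LC_char:
  assumes imm: "immersion_on U f" and x: "x \<in> U"
    and dA: "A differentiable (at x)" and dZ: "Z differentiable (at x)"
  shows "LC f A Z x = solv (fd f x) (fd (push f Z) x (A x))"
proof -
  define F where "F = fd f x"
  have linF: "linear F" and injF: "inj F" unfolding F_def using imm_linear[OF imm x] imm_inj[OF imm x] by auto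
  define h where "h = d2 f x"
  have hsym: "\<And>p q. h p q = h q p" unfolding h_def using d2_sym[OF imm_open[OF imm] imm_smooth[OF imm] x] by blast
  define T where "T = fd (push f Z) x (A x)"
  have dC: "(\<lambda>_. z) differentiable (at x)" for z :: 'a by simp
  have pZ: "fd (push f Z) x v = h (Z x) v + F (fd Z x v)" for v
    unfolding h_def F_def using push_fd[OF imm x dZ] .
  have pA: "fd (push f A) x v = h (A x) v + F (fd A x v)" for v
    unfolding h_def F_def using push_fd[OF imm x dA] .
  have pC: "fd (push f (\<lambda>_. z)) x v = h z v" for v z
    unfolding h_def F_def using push_fd[OF imm x dC[of z]] linear_0[OF imm_linear[OF imm x]] by (simp add: fd_const)
  have psh: "push f P x = F (P x)" for P unfolding push_def F_def by simp
  have T: "T = h (Z x) (A x) + F (fd Z x (A x))" unfolding T_def pZ ..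
  have kos: "koszul f A Z (\<lambda>_. z) x = 2 * (T \<bullet> F z)" for z
  proof -
    have g1: "dir (gf f Z (\<lambda>_. z)) A x = (h (Z x) (A x) + F (fd Z x (A x))) \<bullet> F z + F (Z x) \<bullet> h z (A x)"
      unfolding dir_def gf_fd[OF imm x dZ dC] pZ pC psh ..
    have g2: "dir (gf f A (\<lambda>_. z)) Z x = (h (A x) (Z x) + F (fd A x (Z x))) \<bullet> F z + F (A x) \<bullet> h z (Z x)"
      unfolding dir_def gf_fd[OF imm x dA dC] pA pC psh ..
    have g3: "dir (gf f A Z) (\<lambda>_. z) x = (h (A x) z + F (fd A x z)) \<bullet> F (Z x) + F (A x) \<bullet> (h (Z x) z + F (fd Z x z))"
      unfolding dir_def gf_fd[OF imm x dA dZ] pA pZ psh ..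
    have b1: "gf f (bracket A Z) (\<lambda>_. z) x = (F (fd Z x (A x)) - F (fd A x (Z x))) \<bullet> F z"
      unfolding gf_def bracket_def dir_def F_def[symmetric] linear_diff[OF linF] ..
    have b2: "gf f (bracket A (\<lambda>_. z)) Z x = - (F (fd A x z) \<bullet> F (Z x))"
      unfolding gf_def bracket_def dir_def F_def[symmetric] fd_const
      using linear_diff[OF linF] linear_0[OF linF] linear_neg[OF linF] by simp
    have b3: "gf f (bracket Z (\<lambda>_. z)) A x = - (F (fd Z x z) \<bullet> F (A x))"
      unfolding gf_def bracket_def dir_def F_def[symmetric] fd_const
      using linear_diff[OF linF] linear_0[OF linF] linear_neg[OF linF] by simp
    show ?thesis unfolding koszul_def g1 g2 g3 b1 b2 b3 T
      using hsym[of z "A x"] hsym[of z "Z x"] hsym[of "A x" "Z x"] hsym[of "A x" z] hsym[of "Z x" z]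
      by (simp add: inner_add_left inner_add_right inner_diff_left inner_commute algebra_simps)
  qed
  have sat: "2 * (F (solv F T) \<bullet> F z) = koszul f A Z (\<lambda>_. z) x" for z
    using solv_inner[OF linF, of T z] kos by simp
  have uniq: "w = solv F T" if "\<forall>z. 2 * (F w \<bullet> F z) = koszul f A Z (\<lambda>_. z) x" for w
  proof -
    have "F w \<bullet> F z = F (solv F T) \<bullet> F z" for z using spec[OF that, of z] sat[of z] by linarith
    then have "(F w - F (solv F T)) \<bullet> F (w - solv F T) = 0"
      by (simp add: inner_diff_left)
    then have "F (w - solv F T) \<bullet> F (w - solv F T) = 0"
      by (simp only: linear_diff[OF linF])
    then have "F (w - solv F T) = 0" by simp
    then show ?thesis using injF linF by (simp add: linear_injective_0) (metis eq_iff_diff_eq_0)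
  qed
  show ?thesis unfolding LC_def T_def[symmetric] F_def[symmetric]
    by (rule the_equality) (use sat uniq in auto)
qed



definition gram :: "('a::euclidean_space \<Rightarrow> 'b::euclidean_space) \<Rightarrow> 'a \<Rightarrow> 'a" where
  "gram G w = (\<Sum>i\<in>Basis. (G w \<bullet> G i) *\<^sub>R i)"

lemma gram_inner:
  assumes "linear G"
  shows "gram G w \<bullet> w = G w \<bullet> G w"
proof -
  have "gram G w \<bullet> w = (\<Sum>i\<in>Basis. (G w \<bullet> G i) * (i \<bullet> w))"
    unfolding gram_def by (simp add: inner_sum_left)
  also have "\<dots> = G w \<bullet> (\<Sum>i\<in>Basis. (w \<bullet> i) *\<^sub>R G i)"
    by (simp add: inner_sum_right inner_commute mult.commute)
  also have "(\<Sum>i\<in>Basis. (w \<bullet> i) *\<^sub>R G i) = G w"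
    by (rule lin_expand[OF assms, symmetric])
  finally show ?thesis .
qed

lemma gram_linear:
  assumes "linear G"
  shows "linear (gram G)"
  unfolding gram_def
  by (rule linearI) (simp_all add: linear_add[OF assms] linear_cmul[OF assms] inner_add_left
      scaleR_add_left sum.distrib scaleR_sum_right)

lemma gram_coerc:
  assumes "linear G" "c > 0" "c * norm w \<le> norm (G w)"
  shows "c\<^sup>2 * norm w \<le> norm (gram G w)"
proof (cases "w = 0")
  case True then show ?thesis by simp
next
  case False
  have "(c * norm w)\<^sup>2 \<le> (norm (G w))\<^sup>2"
    using assms(2,3) by (simp add: power_mono)
  also have "\<dots> = gram G w \<bullet> w" by (simp add: gram_inner[OF assms(1)] power2_norm_eq_inner)
  also have "\<dots> \<le> norm (gram G w) * norm w" by (rule norm_cauchy_schwarz)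
  finally have "(c\<^sup>2 * norm w) * norm w \<le> norm (gram G w) * norm w" by (simp add: power2_eq_square algebra_simps)
  then show ?thesis using False by simp
qed

lemma gram_solv:
  assumes "linear G"
  shows "gram G (solv G b) = (\<Sum>i\<in>Basis. (b \<bullet> G i) *\<^sub>R i)"
  unfolding gram_def solv_inner[OF assms] ..

lemma gram_expand:
  assumes "linear G"
  shows "gram G w = (\<Sum>i\<in>Basis. (\<Sum>j\<in>Basis. (w \<bullet> j) * (G j \<bullet> G i)) *\<^sub>R i)"
proof -
  have "G w = (\<Sum>j\<in>Basis. (w \<bullet> j) *\<^sub>R G j)" by (rule lin_expand[OF assms])
  then show ?thesis unfolding gram_def by (simp add: inner_sum_left)
qed

lemma gram_diff_bound:
  assumes "linear G1" "linear G2"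
  shows "norm (gram G1 w - gram G2 w) \<le> norm w * (\<Sum>i\<in>Basis. \<Sum>j\<in>Basis. \<bar>G1 j \<bullet> G1 i - G2 j \<bullet> G2 i\<bar>)"
proof -
  have "gram G1 w - gram G2 w = (\<Sum>i\<in>Basis. (\<Sum>j\<in>Basis. (w \<bullet> j) * (G1 j \<bullet> G1 i - G2 j \<bullet> G2 i)) *\<^sub>R i)"
    unfolding gram_expand[OF assms(1)] gram_expand[OF assms(2)]
    by (simp add: sum_subtractf[symmetric] scaleR_diff_left[symmetric] right_diff_distrib)
  also have "norm \<dots> \<le> (\<Sum>i\<in>Basis. norm ((\<Sum>j\<in>Basis. (w \<bullet> j) * (G1 j \<bullet> G1 i - G2 j \<bullet> G2 i)) *\<^sub>R i))"
    by (rule norm_sum)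
  also have "\<dots> \<le> (\<Sum>i\<in>Basis. norm w * (\<Sum>j\<in>Basis. \<bar>G1 j \<bullet> G1 i - G2 j \<bullet> G2 i\<bar>))"
  proof (rule sum_mono)
    fix i :: 'a assume i: "i \<in> Basis"
    have "norm ((\<Sum>j\<in>Basis. (w \<bullet> j) * (G1 j \<bullet> G1 i - G2 j \<bullet> G2 i)) *\<^sub>R i)
        = \<bar>\<Sum>j\<in>Basis. (w \<bullet> j) * (G1 j \<bullet> G1 i - G2 j \<bullet> G2 i)\<bar>" using i by simp
    also have "\<dots> \<le> (\<Sum>j\<in>Basis. \<bar>(w \<bullet> j) * (G1 j \<bullet> G1 i - G2 j \<bullet> G2 i)\<bar>)" by (rule sum_abs)
    also have "\<dots> \<le> (\<Sum>j\<in>Basis. norm w * \<bar>G1 j \<bullet> G1 i - G2 j \<bullet> G2 i\<bar>)"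
      by (rule sum_mono) (simp add: abs_mult Basis_le_norm mult_right_mono)
    finally show "norm ((\<Sum>j\<in>Basis. (w \<bullet> j) * (G1 j \<bullet> G1 i - G2 j \<bullet> G2 i)) *\<^sub>R i)
        \<le> norm w * (\<Sum>j\<in>Basis. \<bar>G1 j \<bullet> G1 i - G2 j \<bullet> G2 i\<bar>)" by (simp add: sum_distrib_left)
  qed
  finally show ?thesis by (simp add: sum_distrib_left)
qed

lemma lin_diff_bound:
  assumes "linear G1" "linear G2"
  shows "norm (G1 w - G2 w) \<le> norm w * (\<Sum>j\<in>Basis. norm (G1 j - G2 j))"
proof -
  have "G1 w - G2 w = (\<Sum>j\<in>Basis. (w \<bullet> j) *\<^sub>R (G1 j - G2 j))"
    using lin_expand[OF assms(1), of w] lin_expand[OF assms(2), of w]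
    by (simp add: sum_subtractf[symmetric] scaleR_diff_right)
  also have "norm \<dots> \<le> (\<Sum>j\<in>Basis. norm ((w \<bullet> j) *\<^sub>R (G1 j - G2 j)))" by (rule norm_sum)
  also have "\<dots> \<le> (\<Sum>j\<in>Basis. norm w * norm (G1 j - G2 j))"
    by (rule sum_mono) (simp add: Basis_le_norm mult_right_mono)
  finally show ?thesis by (simp add: sum_distrib_left)
qed



lemma diff_tendsto0: "f differentiable (at x) \<Longrightarrow> ((\<lambda>y. f y - f x) \<longlongrightarrow> 0) (at x)"
  using differentiable_imp_continuous_within[of f x UNIV] continuous_at LIM_zero by blast

lemma diff_tendsto: "f differentiable (at x) \<Longrightarrow> (f \<longlongrightarrow> f x) (at x)"
  using differentiable_imp_continuous_within[of f x UNIV] continuous_at by blast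

lemma sol_diff:
  fixes G :: "'a::euclidean_space \<Rightarrow> 'a \<Rightarrow> 'b::euclidean_space" and V :: "'a \<Rightarrow> 'b"
  assumes U: "open U" "x \<in> U" and lin: "\<And>y. y \<in> U \<Longrightarrow> linear (G y)" and injx: "inj (G x)"
    and dG: "\<And>i. i \<in> Basis \<Longrightarrow> (\<lambda>y. G y i) differentiable (at x)" and dV: "V differentiable (at x)"
  shows "(\<lambda>y. solv (G y) (V y)) differentiable (at x)"
proof -
  define s where "s y = solv (G y) (V y)" for y
  define s0 where "s0 = s x"
  define r where "r y = (\<Sum>i\<in>Basis. (V y \<bullet> G y i) *\<^sub>R i)" for y
  define q where "q y = r y - gram (G y) s0" for y
  have linx: "linear (G x)" using lin U by blast
  obtain B where B: "B > 0" "\<And>w. B * norm w \<le> norm (G x w)"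
    using linear_inj_bounded_below_pos[OF linx injx] by blast
  define c where "c = B / 2"
  have c: "c > 0" using B by (simp add: c_def)
  have c2: "c\<^sup>2 > 0" using c by simp
  define \<delta> where "\<delta> y = (\<Sum>j\<in>Basis. norm (G y j - G x j))" for y
  have \<delta>lim: "(\<delta> \<longlongrightarrow> 0) (at x)"
  proof -
    have t: "((\<lambda>y. norm (G y j - G x j)) \<longlongrightarrow> 0) (at x)" if "j \<in> Basis" for j
      using tendsto_norm_zero[OF diff_tendsto0[OF dG[OF that]]] .
    have "((\<lambda>y. \<Sum>j\<in>Basis. norm (G y j - G x j)) \<longlongrightarrow> (\<Sum>j\<in>(Basis::'a set). 0)) (at x)"
      by (rule tendsto_sum) (rule t)
    then show ?thesis unfolding \<delta>_def[abs_def] by simp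
  qed
  define \<epsilon> where "\<epsilon> y = (\<Sum>i\<in>Basis. \<Sum>j\<in>Basis. \<bar>G x j \<bullet> G x i - G y j \<bullet> G y i\<bar>)" for y
  have \<epsilon>lim: "(\<epsilon> \<longlongrightarrow> 0) (at x)"
  proof -
    have "((\<lambda>y. \<bar>G x j \<bullet> G x i - G y j \<bullet> G y i\<bar>) \<longlongrightarrow> 0) (at x)" if "i \<in> Basis" "j \<in> Basis" for i j
    proof -
      have "((\<lambda>y. G y j \<bullet> G y i) \<longlongrightarrow> G x j \<bullet> G x i) (at x)"
        using tendsto_inner[OF diff_tendsto[OF dG[OF that(2)]] diff_tendsto[OF dG[OF that(1)]]] .
      then have "((\<lambda>y. G x j \<bullet> G x i - G y j \<bullet> G y i) \<longlongrightarrow> G x j \<bullet> G x i - G x j \<bullet> G x i) (at x)"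
        by (intro tendsto_diff tendsto_const)
      then show ?thesis using tendsto_rabs by fastforce
    qed
    then have "(\<epsilon> \<longlongrightarrow> (\<Sum>i\<in>(Basis::'a set). \<Sum>j\<in>(Basis::'a set). 0)) (at x)"
      unfolding \<epsilon>_def[abs_def] by (intro tendsto_sum) auto
    then show ?thesis by simp
  qed
  have ev1: "eventually (\<lambda>y. y \<in> U - {x} \<and> \<delta> y < B / 2) (at x)"
    using eventually_conj[OF eventually_at_in_open[OF U] order_tendstoD(2)[OF \<delta>lim, of "B/2"]] B by simp
  have coerc: "c * norm w \<le> norm (G y w)" if "y \<in> U" "\<delta> y < B / 2" for y w
  proof -
    have "norm (G x w - G y w) \<le> norm w * (\<Sum>j\<in>Basis. norm (G x j - G y j))"
      by (rule lin_diff_bound[OF linx lin[OF that(1)]])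
    also have "(\<Sum>j\<in>Basis. norm (G x j - G y j)) = \<delta> y" unfolding \<delta>_def by (simp add: norm_minus_commute)
    finally have a: "norm (G x w - G y w) \<le> norm w * \<delta> y" .
    have "norm w * \<delta> y \<le> norm w * (B/2)" using that(2) by (intro mult_left_mono) auto
    moreover have "norm (G x w) \<le> norm (G y w) + norm (G x w - G y w)" by (rule norm_triangle_sub)
    ultimately show ?thesis using a B(2)[of w] unfolding c_def by (simp add: algebra_simps)
  qed
  have coercx: "c * norm w \<le> norm (G x w)" for w
  proof -
    have "c * norm w \<le> B * norm w" unfolding c_def using B by (intro mult_right_mono) auto
    then show ?thesis using B(2)[of w] by linarith
  qed
  have gcx: "c\<^sup>2 * norm w \<le> norm (gram (G x) w)" for w by (rule gram_coerc[OF linx c coercx])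
  have qeq: "q y = (\<Sum>i\<in>Basis. (V y \<bullet> G y i) *\<^sub>R i) - (\<Sum>i\<in>Basis. (\<Sum>j\<in>Basis. (s0 \<bullet> j) * (G y j \<bullet> G y i)) *\<^sub>R i)"
    if "y \<in> U" for y
    unfolding q_def r_def gram_expand[OF lin[OF that]] ..
  have dq: "q differentiable (at x)"
  proof -
    have "(\<lambda>y. (\<Sum>i\<in>Basis. (V y \<bullet> G y i) *\<^sub>R i) - (\<Sum>i\<in>Basis. (\<Sum>j\<in>Basis. (s0 \<bullet> j) * (G y j \<bullet> G y i)) *\<^sub>R i))
        differentiable (at x)"
      apply (rule differentiable_diff)
       apply (rule differentiable_sum, simp, rule ballI, rule differentiable_scaleR)
        apply (rule differentiable_inner[OF dV dG], assumption, rule differentiable_const)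
      apply (rule differentiable_sum, simp, rule ballI, rule differentiable_scaleR)
       apply (rule differentiable_sum, simp, rule ballI, rule differentiable_mult)
        apply (rule differentiable_const, rule differentiable_inner[OF dG dG], assumption, assumption)
      by (rule differentiable_const)
    then show ?thesis using diff_cong[OF U(1) U(2) qeq] by simp
  qed
  define Q where "Q = fd q x"
  have hq: "(q has_derivative Q) (at x)" unfolding Q_def using fd_works[OF dq] .
  have blQ: "bounded_linear Q" using hq has_derivative_bounded_linear by blast
  obtain K where K: "K > 0" "\<And>v. norm (Q v) \<le> norm v * K" using bounded_linear.pos_bounded[OF blQ] by blast
  define n1 where "n1 y = norm (q y - q x - Q (y - x)) / norm (y - x)" for y
  have n1lim: "(n1 \<longlongrightarrow> 0) (at x)" using hq unfolding has_derivative_iff_norm n1_def[abs_def] by simp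
  have qx: "q x = 0" unfolding q_def r_def s0_def s_def gram_solv[OF linx] by simp
  have Aeq: "gram (G y) (s y) = r y" if "y \<in> U" for y
    unfolding s_def r_def gram_solv[OF lin[OF that]] ..
  have linAx: "linear (gram (G x))" by (rule gram_linear[OF linx])
  have injA: "inj (gram (G x))"
  proof (rule linear_injective_0[OF linAx, THEN iffD2], intro allI impI)
    fix w assume "gram (G x) w = 0"
    then show "w = 0" using gcx[of w] c2 by (simp add: zero_less_mult_iff mult_le_0_iff) 
  qed
  obtain Ainv where Ainv: "linear Ainv" "\<And>w. Ainv (gram (G x) w) = w" "\<And>w. gram (G x) (Ainv w) = w"
    using linAx injA linear_injective_isomorphism by blast
  define L where "L = (\<lambda>v. Ainv (Q v))"
  have blL: "bounded_linear L" unfolding L_def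
    using linear_conv_bounded_linear Ainv(1) blQ bounded_linear_compose by blast
  define bnd where "bnd y = (n1 y + \<epsilon> y * ((n1 y + K) / c\<^sup>2)) / c\<^sup>2" for y
  have bndlim: "(bnd \<longlongrightarrow> 0) (at x)"
  proof -
    have "(bnd \<longlongrightarrow> (0 + 0 * ((0 + K) / c\<^sup>2)) / c\<^sup>2) (at x)"
      unfolding bnd_def[abs_def] by (intro tendsto_intros n1lim \<epsilon>lim) (use c2 in auto)
    then show ?thesis by simp
  qed
  have main: "norm (s y - s x - L (y - x)) / norm (y - x) \<le> bnd y"
    if y: "y \<in> U - {x}" "\<delta> y < B / 2" for y
  proof -
    have yU: "y \<in> U" and yx: "norm (y - x) > 0" using y by auto
    have linY: "linear (gram (G y))" by (rule gram_linear[OF lin[OF yU]])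
    define d where "d = s y - s0"
    have Ad: "gram (G y) d = q y" unfolding d_def q_def using Aeq[OF yU] linear_diff[OF linY] by simp
    have gcy: "c\<^sup>2 * norm w \<le> norm (gram (G y) w)" for w
      by (rule gram_coerc[OF lin[OF yU] c coerc[OF yU y(2)]])
    have nq: "norm (q y) \<le> (n1 y + K) * norm (y - x)"
    proof -
      have "norm (q y) \<le> norm (q y - q x - Q (y - x)) + norm (Q (y - x))"
        using qx norm_triangle_ineq[of "q y - q x - Q (y - x)" "Q (y - x)"] by simp
      also have "norm (q y - q x - Q (y - x)) = n1 y * norm (y - x)" unfolding n1_def using yx by simp
      finally show ?thesis using K(2)[of "y - x"] by (simp add: algebra_simps)
    qed
    have nd: "norm d \<le> (n1 y + K) * norm (y - x) / c\<^sup>2"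
      using gcy[of d] nq c2 unfolding Ad by (simp add: pos_le_divide_eq mult.commute)
    define e where "e = s y - s x - L (y - x)"
    have Ae: "gram (G x) e = (q y - q x - Q (y - x)) + (gram (G x) d - gram (G y) d)"
    proof -
      have "gram (G x) e = gram (G x) d - gram (G x) (L (y - x))"
        unfolding e_def d_def s0_def using linear_diff[OF linAx] by simp
      also have "gram (G x) (L (y - x)) = Q (y - x)" unfolding L_def Ainv(3) ..
      finally show ?thesis using Ad qx by simp
    qed
    have "norm (gram (G x) e) \<le> norm (q y - q x - Q (y - x)) + norm (gram (G x) d - gram (G y) d)"
      unfolding Ae by (rule norm_triangle_ineq)
    also have "norm (gram (G x) d - gram (G y) d) \<le> norm d * \<epsilon> y"
      unfolding \<epsilon>_def by (rule gram_diff_bound[OF linx lin[OF yU]])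
    finally have "norm (gram (G x) e) \<le> n1 y * norm (y - x) + norm d * \<epsilon> y"
      unfolding n1_def using yx by simp
    moreover have "norm d * \<epsilon> y \<le> ((n1 y + K) * norm (y - x) / c\<^sup>2) * \<epsilon> y"
      by (rule mult_right_mono[OF nd]) (simp add: \<epsilon>_def sum_nonneg)
    ultimately have "norm (gram (G x) e) \<le> n1 y * norm (y - x) + ((n1 y + K) * norm (y - x) / c\<^sup>2) * \<epsilon> y"
      by simp
    also have "\<dots> = (n1 y + \<epsilon> y * ((n1 y + K) / c\<^sup>2)) * norm (y - x)" by (simp add: algebra_simps)
    finally have "c\<^sup>2 * norm e \<le> (n1 y + \<epsilon> y * ((n1 y + K) / c\<^sup>2)) * norm (y - x)"
      using gcx[of e] by simp
    then have "norm e \<le> bnd y * norm (y - x)" unfolding bnd_def using c2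
      by (simp add: pos_le_divide_eq field_simps)
    then show ?thesis unfolding e_def using yx by (simp add: pos_divide_le_eq)
  qed
  have "((\<lambda>y. norm (s y - s x - L (y - x)) / norm (y - x)) \<longlongrightarrow> 0) (at x)"
  proof (rule Lim_null_comparison[OF _ bndlim])
    show "eventually (\<lambda>y. norm (norm (s y - s x - L (y - x)) / norm (y - x)) \<le> bnd y) (at x)"
      using ev1 by (rule eventually_mono) (use main in simp)
  qed
  then have "(s has_derivative L) (at x)" using blL unfolding has_derivative_iff_norm by simp
  then show ?thesis unfolding s_def[abs_def] differentiable_def by blast
qed

lemma sol_diff_f:
  assumes imm: "immersion_on U f" and x: "x \<in> U" and dV: "V differentiable (at x)"
  shows "(\<lambda>y. solv (fd f y) (V y)) differentiable (at x)"
proof (rule sol_diff[where G="\<lambda>y. fd f y", OF imm_open[OF imm] x])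
  show "\<And>y. y \<in> U \<Longrightarrow> linear (fd f y)" using imm_linear[OF imm] .
  show "inj (fd f x)" using imm_inj[OF imm x] .
  show "(\<lambda>y. fd f y i) differentiable (at x)" for i
    by (rule smooth_diff[OF smooth_pd[OF imm_smooth[OF imm]] x])
qed (rule dV)



lemma inner_fd:
  assumes "A differentiable (at x)" "B differentiable (at x)"
  shows "fd (\<lambda>y. A y \<bullet> B y) x z = A x \<bullet> fd B x z + fd A x z \<bullet> B x"
  using fd_eq[OF has_derivative_inner[OF fd_works[OF assms(1)] fd_works[OF assms(2)]]] by simp

lemma add_fd:
  assumes "A differentiable (at x)" "B differentiable (at x)"
  shows "fd (\<lambda>y. A y + B y) x z = fd A x z + fd B x z"
  using fd_eq[OF has_derivative_add[OF fd_works[OF assms(1)] fd_works[OF assms(2)]]] by simp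

lemma diff_fd:
  assumes "A differentiable (at x)" "B differentiable (at x)"
  shows "fd (\<lambda>y. A y - B y) x z = fd A x z - fd B x z"
  using fd_eq[OF has_derivative_diff[OF fd_works[OF assms(1)] fd_works[OF assms(2)]]] by simp

lemma zero_fd:
  assumes "open U" "x \<in> U" "\<And>y. y \<in> U \<Longrightarrow> \<Phi> y = 0"
  shows "fd \<Phi> x z = 0"
proof -
  have "fd \<Phi> x = fd (\<lambda>_. 0) x" using fd_cong[OF assms(1,2), of \<Phi> "\<lambda>_. 0"] assms(3) by blast
  also have "\<dots> = (\<lambda>_. 0)" by (rule fd_const)
  finally show ?thesis by simp
qed

definition d3 :: "('a::euclidean_space \<Rightarrow> 'b::real_normed_vector) \<Rightarrow> 'a \<Rightarrow> 'a \<Rightarrow> 'a \<Rightarrow> 'a \<Rightarrow> 'b" where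
  "d3 F x a b c = fd (\<lambda>y. d2 F y a b) x c"

lemma smooth_pd2:
  assumes "smooth_on U F"
  shows "smooth_on U (\<lambda>y. d2 F y a b)"
  unfolding d2_def using smooth_pd[OF smooth_pd[OF assms]] .

lemma pd_diff: "smooth_on U F \<Longrightarrow> x \<in> U \<Longrightarrow> (\<lambda>y. fd F y a) differentiable (at x)"
  using smooth_diff smooth_pd by blast

lemma pd2_diff: "smooth_on U F \<Longrightarrow> x \<in> U \<Longrightarrow> (\<lambda>y. d2 F y a b) differentiable (at x)"
  using smooth_diff smooth_pd2 by blast

lemma pd_fd: "fd (\<lambda>y. fd F y a) x b = d2 F x a b" unfolding d2_def ..
lemma pd2_fd: "fd (\<lambda>y. d2 F y a b) x c = d3 F x a b c" unfolding d3_def ..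

lemma d3_sym12:
  assumes "open U" "smooth_on U F" "x \<in> U"
  shows "d3 F x a b c = d3 F x b a c"
  unfolding d3_def using fd_cong[OF assms(1,3), of "\<lambda>y. d2 F y a b" "\<lambda>y. d2 F y b a"]
    d2_sym[OF assms(1,2)] by simp

lemma d3_sym23:
  assumes "open U" "smooth_on U F" "x \<in> U"
  shows "d3 F x a b c = d3 F x a c b"
proof -
  have "d2 (\<lambda>y. fd F y a) x b c = d2 (\<lambda>y. fd F y a) x c b"
    by (rule d2_sym[OF assms(1) smooth_pd[OF assms(2)] assms(3)])
  then show ?thesis unfolding d3_def d2_def .
qed

context
  fixes U f \<tau>
  assumes imm: "immersion_on U f" and bend: "inf_bending U f \<tau>"
begin

lemma U_open: "open U" using imm_open[OF imm] .
lemma sf: "smooth_on U f" using imm_smooth[OF imm] .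
lemma st: "smooth_on U \<tau>" using bend by (simp add: inf_bending_def)

lemma bend_pol: "y \<in> U \<Longrightarrow> fd f y u \<bullet> fd \<tau> y v + fd f y v \<bullet> fd \<tau> y u = 0"
proof -
  assume y: "y \<in> U"
  have lf: "linear (fd f y)" and lt: "linear (fd \<tau> y)"
    using fd_linear smooth_diff sf st y by blast+
  have b: "\<And>w. fd f y w \<bullet> fd \<tau> y w = 0" using bend y by (simp add: inf_bending_def)
  have "0 = fd f y (u + v) \<bullet> fd \<tau> y (u + v)" using b by simp
  also have "\<dots> = fd f y u \<bullet> fd \<tau> y u + fd f y u \<bullet> fd \<tau> y v + fd f y v \<bullet> fd \<tau> y u + fd f y v \<bullet> fd \<tau> y v"
    by (simp add: linear_add[OF lf] linear_add[OF lt] inner_add_left inner_add_right)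
  finally show ?thesis using b by simp
qed

lemma bend_E1:
  assumes y: "y \<in> U"
  shows "d2 f y u w \<bullet> fd \<tau> y v + fd f y u \<bullet> d2 \<tau> y v w + (d2 f y v w \<bullet> fd \<tau> y u + fd f y v \<bullet> d2 \<tau> y u w) = 0"
proof -
  have "fd (\<lambda>y. fd f y u \<bullet> fd \<tau> y v + fd f y v \<bullet> fd \<tau> y u) y w = 0"
    by (rule zero_fd[OF U_open y bend_pol])
  moreover have "fd (\<lambda>y. fd f y u \<bullet> fd \<tau> y v + fd f y v \<bullet> fd \<tau> y u) y w =
     fd f y u \<bullet> d2 \<tau> y v w + d2 f y u w \<bullet> fd \<tau> y v + (fd f y v \<bullet> d2 \<tau> y u w + d2 f y v w \<bullet> fd \<tau> y u)"
    apply (subst add_fd)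
      apply (rule differentiable_inner, rule pd_diff[OF sf y], rule pd_diff[OF st y])
     apply (rule differentiable_inner, rule pd_diff[OF sf y], rule pd_diff[OF st y])
    apply (subst inner_fd, rule pd_diff[OF sf y], rule pd_diff[OF st y])
    apply (subst inner_fd, rule pd_diff[OF sf y], rule pd_diff[OF st y])
    by (simp only: pd_fd)
  ultimately show ?thesis by simp
qed

lemma bend_E2:
  assumes x: "x \<in> U"
  shows "(fd f x u \<bullet> d3 \<tau> x v w z + d2 f x u z \<bullet> d2 \<tau> x v w) + (d2 f x u w \<bullet> d2 \<tau> x v z + d3 f x u w z \<bullet> fd \<tau> x v)
     + ((fd f x v \<bullet> d3 \<tau> x u w z + d2 f x v z \<bullet> d2 \<tau> x u w) + (d2 f x v w \<bullet> d2 \<tau> x u z + d3 f x v w z \<bullet> fd \<tau> x u)) = 0"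
proof -
  have "fd (\<lambda>y. d2 f y u w \<bullet> fd \<tau> y v + fd f y u \<bullet> d2 \<tau> y v w + (d2 f y v w \<bullet> fd \<tau> y u + fd f y v \<bullet> d2 \<tau> y u w)) x z = 0"
    by (rule zero_fd[OF U_open x bend_E1])
  moreover
  have D: "\<And>A B. A differentiable (at x) \<Longrightarrow> B differentiable (at x) \<Longrightarrow> (\<lambda>y. A y \<bullet> B y) differentiable (at x)"
    by (rule differentiable_inner)
  have d1: "(\<lambda>y. d2 f y u w \<bullet> fd \<tau> y v) differentiable (at x)" "(\<lambda>y. fd f y u \<bullet> d2 \<tau> y v w) differentiable (at x)"
      "(\<lambda>y. d2 f y v w \<bullet> fd \<tau> y u) differentiable (at x)" "(\<lambda>y. fd f y v \<bullet> d2 \<tau> y u w) differentiable (at x)"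
    by (rule D, rule pd2_diff[OF sf x], rule pd_diff[OF st x]; fail |
        rule D, rule pd_diff[OF sf x], rule pd2_diff[OF st x])+
  have d2': "(\<lambda>y. d2 f y u w \<bullet> fd \<tau> y v + fd f y u \<bullet> d2 \<tau> y v w) differentiable (at x)"
      "(\<lambda>y. d2 f y v w \<bullet> fd \<tau> y u + fd f y v \<bullet> d2 \<tau> y u w) differentiable (at x)"
    using d1 by (auto intro: differentiable_add)
  have "fd (\<lambda>y. d2 f y u w \<bullet> fd \<tau> y v + fd f y u \<bullet> d2 \<tau> y v w + (d2 f y v w \<bullet> fd \<tau> y u + fd f y v \<bullet> d2 \<tau> y u w)) x z
     = (fd f x u \<bullet> d3 \<tau> x v w z + d2 f x u z \<bullet> d2 \<tau> x v w) + (d2 f x u w \<bullet> d2 \<tau> x v z + d3 f x u w z \<bullet> fd \<tau> x v)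
     + ((fd f x v \<bullet> d3 \<tau> x u w z + d2 f x v z \<bullet> d2 \<tau> x u w) + (d2 f x v w \<bullet> d2 \<tau> x u z + d3 f x v w z \<bullet> fd \<tau> x u))"
    apply (subst add_fd[OF d2'])
    apply (subst add_fd[OF d1(1,2)])
    apply (subst add_fd[OF d1(3,4)])
    apply (subst inner_fd[OF pd2_diff[OF sf x] pd_diff[OF st x]])+
    apply (subst inner_fd[OF pd_diff[OF sf x] pd2_diff[OF st x]])+
    by (simp only: pd_fd pd2_fd add.commute add.assoc)
  ultimately show ?thesis by simp
qed

end



lemma alg_pair:
  fixes F Dt :: "'a::euclidean_space \<Rightarrow> 'b::euclidean_space" and S :: "'b \<Rightarrow> 'a"
  assumes linF: "linear F" and linS: "linear S" and linD: "linear Dt"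
    and PS: "\<And>v w. F (S v) \<bullet> F w = v \<bullet> F w"
    and t0: "\<And>u. F u \<bullet> K = - (H \<bullet> Dt u)"
  shows "((K - Dt (S H)) - F (S (K - Dt (S H)))) \<bullet> (C - F (S C))
     = K \<bullet> C + H \<bullet> Dt (S C) - Dt (S H) \<bullet> C + Dt (S H) \<bullet> F (S C)"
proof -
  define A where "A = K - Dt (S H)"
  have o: "F (S A) \<bullet> (C - F (S C)) = 0"
    using PS[of C "S A"] by (simp add: inner_diff_right inner_commute)
  have "(A - F (S A)) \<bullet> (C - F (S C)) = A \<bullet> C - A \<bullet> F (S C)"
    using o by (simp add: inner_diff_left inner_diff_right)
  also have "A \<bullet> F (S C) = - (H \<bullet> Dt (S C)) - Dt (S H) \<bullet> F (S C)"
  proof -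
    have "A \<bullet> F (S C) = K \<bullet> F (S C) - Dt (S H) \<bullet> F (S C)" unfolding A_def by (rule inner_diff_left)
    also have "K \<bullet> F (S C) = - (H \<bullet> Dt (S C))" using t0[of "S C"] by (simp only: inner_commute[of K])
    finally show ?thesis .
  qed
  finally show ?thesis unfolding A_def by (simp add: inner_diff_left)
qed

context
  fixes U f \<tau>
  assumes imm: "immersion_on U f" and bend: "inf_bending U f \<tau>"
begin

lemma T0:
  assumes x: "x \<in> U"
  shows "fd f x u \<bullet> d2 \<tau> x v w = - (d2 f x v w \<bullet> fd \<tau> x u)"
proof -
  have hs: "\<And>a b. d2 f x a b = d2 f x b a" using d2_sym[OF U_open[OF imm bend] sf[OF imm bend] x] by blast
  have ks: "\<And>a b. d2 \<tau> x a b = d2 \<tau> x b a" using d2_sym[OF U_open[OF imm bend] st[OF imm bend] x] by blast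
  note e1 = bend_E1[OF imm bend x, where u=u and v=v and w=w]
  note e2 = bend_E1[OF imm bend x, where u=v and v=w and w=u, simplified hs[of w u] ks[of w u] hs[of v u] ks[of v u]]
  note e3 = bend_E1[OF imm bend x, where u=w and v=u and w=v, simplified hs[of w v] ks[of w v]]
  show ?thesis using e1 e2 e3 by linarith
qed

lemma star:
  assumes x: "x \<in> U"
  shows "d2 f x u z \<bullet> d2 \<tau> x v w + d2 f x v w \<bullet> d2 \<tau> x u z = d2 f x v z \<bullet> d2 \<tau> x u w + d2 f x u w \<bullet> d2 \<tau> x v z"
proof -
  note o = U_open[OF imm bend] and s1 = sf[OF imm bend] and s2 = st[OF imm bend]
  have hs: "\<And>a b. d2 f x a b = d2 f x b a" using d2_sym[OF o s1 x] by blast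
  have ks: "\<And>a b. d2 \<tau> x a b = d2 \<tau> x b a" using d2_sym[OF o s2 x] by blast
  have f12: "\<And>a b c. d3 f x a b c = d3 f x b a c" using d3_sym12[OF o s1 x] by blast
  have f23: "\<And>a b c. d3 f x a b c = d3 f x a c b" using d3_sym23[OF o s1 x] by blast
  have t12: "\<And>a b c. d3 \<tau> x a b c = d3 \<tau> x b a c" using d3_sym12[OF o s2 x] by blast
  have t23: "\<And>a b c. d3 \<tau> x a b c = d3 \<tau> x a c b" using d3_sym23[OF o s2 x] by blast
  note e1 = bend_E2[OF imm bend x, of u w v z, simplified hs ks f12 f23 t12 t23]
  note e2 = bend_E2[OF imm bend x, of v w u z, simplified hs ks f12 f23 t12 t23]
  note e3 = bend_E2[OF imm bend x, of u z v w, simplified hs ks f12 f23 t12 t23]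
  note e4 = bend_E2[OF imm bend x, of v z u w, simplified hs ks f12 f23 t12 t23]
  show ?thesis
    apply (simp only: hs ks)?
    using e1 e2 e3 e4 by linarith
qed

lemma tanp_eq: "x \<in> U \<Longrightarrow> tanp f x v = fd f x (solv (fd f x) v)"
  unfolding tanp_def using solv_F[OF imm_linear[OF imm]] by simp

lemma norp_eq: "x \<in> U \<Longrightarrow> norp f x v = v - fd f x (solv (fd f x) v)"
  unfolding norp_def using tanp_eq by simp

lemma LCx:
  assumes x: "x \<in> U" and dP: "P differentiable (at x)" and dQ: "Q differentiable (at x)"
  shows "LC f P Q x = solv (fd f x) (d2 f x (Q x) (P x)) + fd Q x (P x)"
proof -
  have lS: "linear (solv (fd f x))" using solv_linear[OF imm_linear[OF imm x] imm_inj[OF imm x]] .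
  show ?thesis unfolding LC_char[OF imm x dP dQ] push_fd[OF imm x dQ] linear_add[OF lS]
    solv_on_F[OF imm_inj[OF imm x]] ..
qed

lemma sffx:
  assumes x: "x \<in> U" and dQ: "Q differentiable (at x)"
  shows "sff f P Q x = norp f x (d2 f x (Q x) (P x))"
proof -
  have lS: "linear (solv (fd f x))" using solv_linear[OF imm_linear[OF imm x] imm_inj[OF imm x]] .
  have lF: "linear (fd f x)" using imm_linear[OF imm x] .
  show ?thesis unfolding sff_def dir_def push_fd[OF imm x dQ] norp_eq[OF x] linear_add[OF lS]
      solv_on_F[OF imm_inj[OF imm x]] linear_add[OF lF] by simp
qed

lemma Lmap_eq: "Lmap \<tau> Q = (\<lambda>y. fd \<tau> y (Q y))" by (rule ext) (simp add: Lmap_def dir_def)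

lemma Btx:
  assumes x: "x \<in> U" and dP: "P differentiable (at x)" and dQ: "Q differentiable (at x)"
  shows "Btens f \<tau> P Q x = d2 \<tau> x (Q x) (P x) - fd \<tau> x (solv (fd f x) (d2 f x (Q x) (P x)))"
proof -
  have lt: "linear (fd \<tau> x)" using fd_linear[OF smooth_diff[OF st[OF imm bend] x]] .
  show ?thesis unfolding Btens_def dir_def Lmap_eq
      dpush_fd[OF U_open[OF imm bend] st[OF imm bend] x dQ] LCx[OF x dP dQ] linear_add[OF lt] by simp
qed

lemma first_eq:
  assumes x: "x \<in> U" and dX: "X differentiable (at x)" and dY: "Y differentiable (at x)"
    and dZ: "Z differentiable (at x)" and dW: "W differentiable (at x)"
  shows "betaT f \<tau> X W x \<bullet> sff f Y Z x + sff f X W x \<bullet> betaT f \<tau> Y Z x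
           = betaT f \<tau> X Z x \<bullet> sff f Y W x + sff f X Z x \<bullet> betaT f \<tau> Y W x"
proof -
  define F where "F = fd f x"
  define S where "S = solv F"
  define Dt where "Dt = fd \<tau> x"
  define h where "h = d2 f x"
  define k where "k = d2 \<tau> x"
  have lF: "linear F" unfolding F_def using imm_linear[OF imm x] .
  have lS: "linear S" unfolding S_def F_def using solv_linear[OF imm_linear[OF imm x] imm_inj[OF imm x]] .
  have lD: "linear Dt" unfolding Dt_def using fd_linear[OF smooth_diff[OF st[OF imm bend] x]] .
  have PS: "\<And>v w. F (S v) \<bullet> F w = v \<bullet> F w" unfolding S_def using solv_inner[OF lF] .
  have bp: "\<And>p q. F p \<bullet> Dt q + F q \<bullet> Dt p = 0" unfolding F_def Dt_def using bend_pol[OF imm bend x] .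
  have t0: "\<And>u p q. F u \<bullet> k p q = - (h p q \<bullet> Dt u)" unfolding F_def k_def h_def Dt_def using T0[OF x] .
  have hs: "\<And>a b. h a b = h b a" unfolding h_def using d2_sym[OF U_open[OF imm bend] sf[OF imm bend] x] by blast
  have ks: "\<And>a b. k a b = k b a" unfolding k_def using d2_sym[OF U_open[OF imm bend] st[OF imm bend] x] by blast
  have N: "\<And>v. norp f x v = v - F (S v)" unfolding F_def S_def using norp_eq[OF x] .
  have bet: "\<And>P Q. P differentiable (at x) \<Longrightarrow> Q differentiable (at x) \<Longrightarrow>
      betaT f \<tau> P Q x = (k (Q x) (P x) - Dt (S (h (Q x) (P x)))) - F (S (k (Q x) (P x) - Dt (S (h (Q x) (P x)))))"
    unfolding betaT_def N using Btx[OF x] unfolding F_def S_def Dt_def h_def k_def by simp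
  have sf': "\<And>P Q. Q differentiable (at x) \<Longrightarrow> sff f P Q x = h (Q x) (P x) - F (S (h (Q x) (P x)))"
    using sffx[OF x] N unfolding h_def by simp
  let ?a = "X x" and ?b = "Y x" and ?z = "Z x" and ?w = "W x"
  have p1: "betaT f \<tau> X W x \<bullet> sff f Y Z x = k ?w ?a \<bullet> h ?z ?b + h ?w ?a \<bullet> Dt (S (h ?z ?b)) - Dt (S (h ?w ?a)) \<bullet> h ?z ?b + Dt (S (h ?w ?a)) \<bullet> F (S (h ?z ?b))"
    unfolding bet[OF dX dW] sf'[OF dZ] by (rule alg_pair[OF lF lS lD PS t0])
  have p2: "betaT f \<tau> Y Z x \<bullet> sff f X W x = k ?z ?b \<bullet> h ?w ?a + h ?z ?b \<bullet> Dt (S (h ?w ?a)) - Dt (S (h ?z ?b)) \<bullet> h ?w ?a + Dt (S (h ?z ?b)) \<bullet> F (S (h ?w ?a))"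
    unfolding bet[OF dY dZ] sf'[OF dW] by (rule alg_pair[OF lF lS lD PS t0])
  have p3: "betaT f \<tau> X Z x \<bullet> sff f Y W x = k ?z ?a \<bullet> h ?w ?b + h ?z ?a \<bullet> Dt (S (h ?w ?b)) - Dt (S (h ?z ?a)) \<bullet> h ?w ?b + Dt (S (h ?z ?a)) \<bullet> F (S (h ?w ?b))"
    unfolding bet[OF dX dZ] sf'[OF dW] by (rule alg_pair[OF lF lS lD PS t0])
  have p4: "betaT f \<tau> Y W x \<bullet> sff f X Z x = k ?w ?b \<bullet> h ?z ?a + h ?w ?b \<bullet> Dt (S (h ?z ?a)) - Dt (S (h ?w ?b)) \<bullet> h ?z ?a + Dt (S (h ?w ?b)) \<bullet> F (S (h ?z ?a))"
    unfolding bet[OF dY dW] sf'[OF dZ] by (rule alg_pair[OF lF lS lD PS t0])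
  have st: "h ?b ?z \<bullet> k ?a ?w + h ?a ?w \<bullet> k ?b ?z = h ?a ?z \<bullet> k ?b ?w + h ?b ?w \<bullet> k ?a ?z"
    unfolding h_def k_def by (rule star[OF x])
  have c1: "F (S (h ?z ?b)) \<bullet> Dt (S (h ?w ?a)) + F (S (h ?w ?a)) \<bullet> Dt (S (h ?z ?b)) = 0" by (rule bp)
  have c2: "F (S (h ?w ?b)) \<bullet> Dt (S (h ?z ?a)) + F (S (h ?z ?a)) \<bullet> Dt (S (h ?w ?b)) = 0" by (rule bp)
  show ?thesis
    apply (simp only: inner_commute[of "sff f X W x"] inner_commute[of "sff f X Z x"] p1 p2 p3 p4)
    using st c1 c2 hs[of ?b ?z] hs[of ?a ?z] hs[of ?b ?w] hs[of ?a ?w] ks[of ?a ?w] ks[of ?b ?z] ks[of ?a ?z] ks[of ?b ?w]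
    by (simp add: inner_commute algebra_simps)
qed

end



lemma comm_fd:
  assumes "open U" "smooth_on U \<phi>" "x \<in> U" "P differentiable (at x)" "Q differentiable (at x)"
  shows "fd (\<lambda>y. fd \<phi> y (Q y)) x (P x) - fd (\<lambda>y. fd \<phi> y (P y)) x (Q x) = fd \<phi> x (bracket P Q x)"
proof -
  have l: "linear (fd \<phi> x)" using fd_linear[OF smooth_diff[OF assms(2,3)]] .
  show ?thesis
    unfolding dpush_fd[OF assms(1-3) assms(5)] dpush_fd[OF assms(1-3) assms(4)] bracket_def dir_def
      linear_diff[OF l] d2_sym[OF assms(1-3), of "Q x" "P x"] by simp
qed

context
  fixes U f \<tau>
  assumes imm: "immersion_on U f" and bend: "inf_bending U f \<tau>"
begin

lemma LC_eqU:
  assumes "y \<in> U" "smooth_on U P" "smooth_on U Q"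
  shows "LC f P Q y = solv (fd f y) (fd (push f Q) y (P y))"
  by (rule LC_char[OF imm assms(1) smooth_diff[OF assms(2,1)] smooth_diff[OF assms(3,1)]])

lemma LC_diff:
  assumes x: "x \<in> U" and sP: "smooth_on U P" and sQ: "smooth_on U Q"
  shows "LC f P Q differentiable (at x)"
proof -
  note o = U_open[OF imm bend]
  have "smooth_on U (push f Q)" unfolding push_eq by (rule smooth_dir[OF o sf[OF imm bend] sQ])
  then have "smooth_on U (\<lambda>y. fd (push f Q) y (P y))" by (rule smooth_dir[OF o _ sP])
  then have "(\<lambda>y. solv (fd f y) (fd (push f Q) y (P y))) differentiable (at x)"
    by (rule sol_diff_f[OF imm x smooth_diff[OF _ x]])
  then show ?thesis using diff_cong[OF o x LC_eqU[OF _ sP sQ]] by (simp only:)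
qed

lemma bracket_smooth:
  assumes sP: "smooth_on U P" and sQ: "smooth_on U Q"
  shows "smooth_on U (bracket P Q)"
proof -
  note o = U_open[OF imm bend]
  have e: "bracket P Q = (\<lambda>y. fd Q y (P y) - fd P y (Q y))" by (rule ext) (simp add: bracket_def dir_def)
  show ?thesis unfolding e by (rule smooth_diffe[OF o smooth_dir[OF o sQ sP] smooth_dir[OF o sP sQ]])
qed

lemma Lmap_smooth: "smooth_on U Q \<Longrightarrow> smooth_on U (Lmap \<tau> Q)"
  unfolding Lmap_eq[OF imm bend] by (rule smooth_dir[OF U_open[OF imm bend] st[OF imm bend]])

lemma Btens_eq: "Btens f \<tau> P Q = (\<lambda>y. fd (Lmap \<tau> Q) y (P y) - fd \<tau> y (LC f P Q y))"
  by (rule ext) (simp add: Btens_def dir_def Lmap_def)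

lemma Btens_diff:
  assumes x: "x \<in> U" and sP: "smooth_on U P" and sQ: "smooth_on U Q"
  shows "Btens f \<tau> P Q differentiable (at x)"
proof -
  note o = U_open[OF imm bend]
  have a: "(\<lambda>y. fd (Lmap \<tau> Q) y (P y)) differentiable (at x)"
    by (rule smooth_diff[OF smooth_dir[OF o Lmap_smooth[OF sQ] sP] x])
  have b: "(\<lambda>y. fd \<tau> y (LC f P Q y)) differentiable (at x)"
    by (rule dpush_diff[OF o st[OF imm bend] x LC_diff[OF x sP sQ]])
  show ?thesis unfolding Btens_eq using differentiable_diff[OF a b] .
qed

lemma Ycal_eq: "Ycal f \<tau> P Q = (\<lambda>y. solv (fd f y) (Btens f \<tau> P Q y))"
  by (rule ext) (simp add: Ycal_def tanp_def solv_def)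

lemma Ycal_diff:
  assumes x: "x \<in> U" and sP: "smooth_on U P" and sQ: "smooth_on U Q"
  shows "Ycal f \<tau> P Q differentiable (at x)"
  unfolding Ycal_eq by (rule sol_diff_f[OF imm x Btens_diff[OF x sP sQ]])

lemma betaT_fd:
  assumes x: "x \<in> U" and sP: "smooth_on U P" and sQ: "smooth_on U Q"
  shows "fd (betaT f \<tau> P Q) x v = fd (Btens f \<tau> P Q) x v - fd (push f (Ycal f \<tau> P Q)) x v"
proof -
  note o = U_open[OF imm bend]
  have "betaT f \<tau> P Q y = Btens f \<tau> P Q y - push f (Ycal f \<tau> P Q) y" if "y \<in> U" for y
    unfolding betaT_def norp_eq[OF imm bend that] push_def Ycal_eq ..
  then have "fd (betaT f \<tau> P Q) x = fd (\<lambda>y. Btens f \<tau> P Q y - push f (Ycal f \<tau> P Q) y) x"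
    by (rule fd_cong[OF o x])
  then show ?thesis
    using diff_fd[OF Btens_diff[OF x sP sQ] push_diff[OF imm x Ycal_diff[OF x sP sQ]]] by simp
qed

lemma second_eq:
  assumes x: "x \<in> U" and sX: "smooth_on U X" and sY: "smooth_on U Y" and sZ: "smooth_on U Z"
  shows "nperp_beta f \<tau> X Y Z x - nperp_beta f \<tau> Y X Z x
           = sff f Y (Ycal f \<tau> X Z) x - sff f X (Ycal f \<tau> Y Z) x
             - norp f x (Lmap \<tau> (curv f X Y Z) x)"
proof -
  note o = U_open[OF imm bend]
  have dX: "X differentiable (at x)" and dY: "Y differentiable (at x)" and dZ: "Z differentiable (at x)"
    using smooth_diff sX sY sZ x by blast+
  define F where "F = fd f x"
  define S where "S = solv F"
  define Dt where "Dt = fd \<tau> x"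
  define N where "N = norp f x"
  define LZ where "LZ = Lmap \<tau> Z"
  define PZ where "PZ = fd (push f Z) x"
  have lF: "linear F" unfolding F_def using imm_linear[OF imm x] .
  have lS: "linear S" unfolding S_def F_def using solv_linear[OF imm_linear[OF imm x] imm_inj[OF imm x]] .
  have lD: "linear Dt" unfolding Dt_def using fd_linear[OF smooth_diff[OF st[OF imm bend] x]] .
  have lN: "linear N" unfolding N_def norp_def tanp_def
    using proj_linear[OF imm_linear[OF imm x]] by (simp add: linear_compose_sub linear_ident)
  have sLZ: "smooth_on U LZ" unfolding LZ_def by (rule Lmap_smooth[OF sZ])
  have lLZ: "linear (fd LZ x)" using fd_linear[OF smooth_diff[OF sLZ x]] .
  have lPZ: "linear PZ" unfolding PZ_def using fd_linear[OF push_diff[OF imm x dZ]] .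
  have dXY: "bracket X Y differentiable (at x)" using smooth_diff[OF bracket_smooth[OF sX sY] x] .
  have e1: "N (fd (betaT f \<tau> P Z) x (Q x)) = N (fd (\<lambda>y. fd LZ y (P y)) x (Q x))
       - N (Btens f \<tau> Q (LC f P Z) x) - N (Dt (LC f Q (LC f P Z) x)) - sff f Q (Ycal f \<tau> P Z) x"
    if sP: "smooth_on U P" and sQ: "smooth_on U Q" for P Q
  proof -
    have dP: "P differentiable (at x)" and dQ: "Q differentiable (at x)" using smooth_diff sP sQ x by blast+
    have a: "(\<lambda>y. fd LZ y (P y)) differentiable (at x)"
      by (rule smooth_diff[OF smooth_dir[OF o sLZ sP] x])
    have b: "(\<lambda>y. fd \<tau> y (LC f P Z y)) differentiable (at x)"
      by (rule dpush_diff[OF o st[OF imm bend] x LC_diff[OF x sP sZ]])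
    have bt: "fd (Btens f \<tau> P Z) x (Q x) = fd (\<lambda>y. fd LZ y (P y)) x (Q x) - fd (\<lambda>y. fd \<tau> y (LC f P Z y)) x (Q x)"
      unfolding Btens_eq LZ_def using diff_fd[OF a[unfolded LZ_def] b] .
    have e2: "fd (\<lambda>y. fd \<tau> y (LC f P Z y)) x (Q x) = Btens f \<tau> Q (LC f P Z) x + Dt (LC f Q (LC f P Z) x)"
      unfolding Btens_def dir_def Lmap_eq[OF imm bend] Dt_def by simp
    show ?thesis
      unfolding betaT_fd[OF x sP sZ] bt e2 sff_def dir_def N_def[symmetric]
      by (simp add: linear_diff[OF lN] linear_add[OF lN])
  qed
  have bLC: "betaT f \<tau> P Z x = N (fd LZ x (P x) - Dt (S (PZ (P x))))"
    if "P differentiable (at x)" for P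
    unfolding betaT_def Btens_def dir_def LZ_def N_def Dt_def S_def F_def PZ_def
      LC_char[OF imm x that dZ] Lmap_def ..
  have dLXY: "LC f X Y differentiable (at x)" "LC f Y X differentiable (at x)"
    using LC_diff[OF x sX sY] LC_diff[OF x sY sX] .
  have tor: "LC f X Y x - LC f Y X x = bracket X Y x"
    unfolding LCx[OF imm bend x dX dY] LCx[OF imm bend x dY dX] bracket_def dir_def
      d2_sym[OF o sf[OF imm bend] x, of "Y x" "X x"] by simp
  have bdiff: "betaT f \<tau> (LC f X Y) Z x - betaT f \<tau> (LC f Y X) Z x
      = N (fd LZ x (bracket X Y x)) - N (Dt (LC f (bracket X Y) Z x))"
  proof -
    have "betaT f \<tau> (LC f X Y) Z x - betaT f \<tau> (LC f Y X) Z x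
       = N (fd LZ x (LC f X Y x - LC f Y X x) - Dt (S (PZ (LC f X Y x - LC f Y X x))))"
      unfolding bLC[OF dLXY(1)] bLC[OF dLXY(2)]
      by (simp add: linear_diff[OF lN] linear_diff[OF lD] linear_diff[OF lS] linear_diff[OF lPZ] linear_diff[OF lLZ])
    also have "LC f (bracket X Y) Z x = S (PZ (bracket X Y x))"
      unfolding LC_char[OF imm x dXY dZ] S_def F_def PZ_def ..
    ultimately show ?thesis unfolding tor by (simp add: linear_diff[OF lN])
  qed
  have comm: "fd (\<lambda>y. fd LZ y (Y y)) x (X x) - fd (\<lambda>y. fd LZ y (X y)) x (Y x) = fd LZ x (bracket X Y x)"
    by (rule comm_fd[OF o sLZ x dX dY])
  have bX: "betaT f \<tau> X (LC f Y Z) x = N (Btens f \<tau> X (LC f Y Z) x)" unfolding betaT_def N_def ..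
  have bY: "betaT f \<tau> Y (LC f X Z) x = N (Btens f \<tau> Y (LC f X Z) x)" unfolding betaT_def N_def ..
  have cv: "N (Lmap \<tau> (curv f X Y Z) x) = N (Dt (LC f X (LC f Y Z) x)) - N (Dt (LC f Y (LC f X Z) x))
      - N (Dt (LC f (bracket X Y) Z x))"
    unfolding Lmap_def dir_def curv_def Dt_def[symmetric] by (simp add: linear_diff[OF lN] linear_diff[OF lD])
  have "nperp_beta f \<tau> X Y Z x - nperp_beta f \<tau> Y X Z x
     = (N (fd (\<lambda>y. fd LZ y (Y y)) x (X x)) - N (fd (\<lambda>y. fd LZ y (X y)) x (Y x)))
       - (betaT f \<tau> (LC f X Y) Z x - betaT f \<tau> (LC f Y X) Z x)
       - N (Dt (LC f X (LC f Y Z) x)) + N (Dt (LC f Y (LC f X Z) x))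
       - sff f X (Ycal f \<tau> Y Z) x + sff f Y (Ycal f \<tau> X Z) x"
    unfolding nperp_beta_def dir_def N_def[symmetric] e1[OF sY sX] e1[OF sX sY] bX bY
    by (simp add: algebra_simps)
  also have "N (fd (\<lambda>y. fd LZ y (Y y)) x (X x)) - N (fd (\<lambda>y. fd LZ y (X y)) x (Y x)) = N (fd LZ x (bracket X Y x))"
    unfolding comm[symmetric] by (simp add: linear_diff[OF lN])
  finally show ?thesis unfolding bdiff N_def[symmetric] cv by (simp add: algebra_simps)
qed

end

theorem proposition9:
  fixes U :: "'a::euclidean_space set"
    and f \<tau> :: "'a \<Rightarrow> 'b::euclidean_space"
    and X Y Z W :: "'a \<Rightarrow> 'a"
  assumes "immersion_on U f"
    and "inf_bending U f \<tau>"
    and "smooth_on U X" and "smooth_on U Y" and "smooth_on U Z" and "smooth_on U W"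
    and "x \<in> U"
  shows "(betaT f \<tau> X W x \<bullet> sff f Y Z x + sff f X W x \<bullet> betaT f \<tau> Y Z x
           = betaT f \<tau> X Z x \<bullet> sff f Y W x + sff f X Z x \<bullet> betaT f \<tau> Y W x)
         \<and> (nperp_beta f \<tau> X Y Z x - nperp_beta f \<tau> Y X Z x
           = sff f Y (Ycal f \<tau> X Z) x - sff f X (Ycal f \<tau> Y Z) x
             - norp f x (Lmap \<tau> (curv f X Y Z) x))"
  proof
  show "betaT f \<tau> X W x \<bullet> sff f Y Z x + sff f X W x \<bullet> betaT f \<tau> Y Z x
           = betaT f \<tau> X Z x \<bullet> sff f Y W x + sff f X Z x \<bullet> betaT f \<tau> Y W x"
    by (rule first_eq[OF assms(1,2,7) smooth_diff[OF assms(3,7)] smooth_diff[OF assms(4,7)]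
          smooth_diff[OF assms(5,7)] smooth_diff[OF assms(6,7)]])
  show "nperp_beta f \<tau> X Y Z x - nperp_beta f \<tau> Y X Z x
           = sff f Y (Ycal f \<tau> X Z) x - sff f X (Ycal f \<tau> Y Z) x
             - norp f x (Lmap \<tau> (curv f X Y Z) x)"
    by (rule second_eq[OF assms(1,2,7,3,4,5)])
qed

end
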